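(* Fix $\delta>-1$ and $n\ge 1$. (a) Let $\boldsymbol{\mathcal D}^A(n)=(D^A_1(n),\dots,D^A_n(n))$ be the degree sequence of $G(n)$ in Model A, and let $$\widetilde{\boldsymbol{\mathcal D}}^A(n):=\bigl(BI_1(T^A_n),\,BI_2(T^A_n-T^A_2),\,\dots,\,BI_{n-1}(T^A_n-T^A_{n-1}),\,BI_n(0)\bigr).$$ Then $\boldsymbol{\mathcal D}^A(n)$ and $\widetilde{\boldsymbol{\mathcal D}}^A(n)$ have the same distribution on $\mathbb R^n$. (b) Let $\boldsymbol{\mathcal D}^B(n)=(D^B_1(n),\dots,D^B_n(n))$ be the degree sequence of $G(n)$ in Model B, and let $$\widetilde{\boldsymbol{\mathcal D}}^B(n):=\bigl(BI_1(T^B_n),\,BI_2(T^B_n),\,BI_3(T^B_n-T^B_2),\,\dots,\,BI_{n}(T^B_n-T^B_{n-1})\bigr),$$ i.e. the $i$-th coordinate is $BI_i(T^B_n-T^B_{i-1})$. Then $\boldsymbol{\mathcal D}^B(n)$ and $\widetilde{\boldsymbol{\mathcal D}}^B(n)$ have the same distribution on $\mathbb R^n$.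
   Context: Let $\delta>-1$. Degrees: a self loop contributes 2 to the degree of its node. Model A: $G(1)$ consists of a single node $v_1$ with a self loop (so $v_1$ has degree 2). For $n\ge1$, given $G(n)$ (nodes $v_1,\dots,v_n$, $n$ edges), $G(n+1)$ is obtained by adding a new node $v_{n+1}$ and one edge joining $v_{n+1}$ to an existing node $v_i$, $1\le i\le n$, chosen with probability $\frac{D_i(n)+\delta}{(2+\delta)n}$, where $D_i(n)$ is the degree of $v_i$ in $G(n)$. Model B: $G(1)$ is as in Model A. For $n\ge1$, given $G(n)$, $G(n+1)$ is obtained either by adding a new node $v_{n+1}$ and an edge joining it to $v_i$, with probability $\frac{D_i(n)+\delta}{(2+\delta)n+1+\delta}$ for each $1\le i\le n$, or by adding a new node $v_{n+1}$ with a self loop, with probability $\frac{1+\delta}{(2+\delta)n+1+\delta}$. B.I. processes: let $\{BI_i(t):t\ge0\}_{i\ge1}$ be independent continuous-time Markov pure-jump processes on the integers with transition rate $q_{j,j+1}=j+\delta$ (only upward jumps by 1), with $BI_1(0)=2$ and $BI_i(0)=1$ for $i\ge2$. Let $\tau^{(i)}_k$ be the $k$-th jump time of $BI_i$ ($\tau^{(i)}_0=0$). Branching times for Model A: $T^A_1=0$ and for $n\ge1$, $T^A_{n+1}:=\min\{T^A_i+\tau^{(i)}_k: k\ge1,\ 1\le i\le n,\ T^A_i+\tau^{(i)}_k>T^A_n\}$ (the $i$-th process is run as $BI_i(t-T^A_i)$, $t\ge T^A_i$; in particular $T^A_2=\tau^{(1)}_1$). Branching times for Model B: $T^B_0=T^B_1=0$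 and for $n\ge1$, $T^B_{n+1}:=\min\{T^B_{i-1}+\tau^{(i)}_k: k\ge1,\ 1\le i\le n+1,\ T^B_{i-1}+\tau^{(i)}_k>T^B_n\}$ (the $i$-th process is run as $BI_i(t-T^B_{i-1})$, $t\ge T^B_{i-1}$). *)

theory Defs
  imports "HOL-Probability.Probability"
begin

section \<open>Graphs as edge lists (nodes are 1,2,...,n)\<close>

type_synonym graph = "(nat \<times> nat) list"

definition deg :: "graph \<Rightarrow> nat \<Rightarrow> nat" where
  "deg G v = length (filter (\<lambda>e. fst e = v) G) + length (filter (\<lambda>e. snd e = v) G)"

definition degseq :: "nat \<Rightarrow> graph \<Rightarrow> nat list" where
  "degseq n G = map (deg G) [1..<n+1]"

text \<open>Model A: G(1) is one node with a self loop; G(n+1) attaches node n+1 to v_i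
  with probability (D_i(n)+delta)/((2+delta) n).  (graphA 0 is a dummy = G(1).)\<close>
fun graphA :: "real \<Rightarrow> nat \<Rightarrow> graph pmf" where
  "graphA \<delta> 0 = return_pmf [(1,1)]"
| "graphA \<delta> (Suc 0) = return_pmf [(1,1)]"
| "graphA \<delta> (Suc (Suc m)) =
     (let n = Suc m in
      do { G \<leftarrow> graphA \<delta> n;
           i \<leftarrow> pmf_of_list (map (\<lambda>i. (i, (real (deg G i) + \<delta>) / ((2 + \<delta>) * real n))) [1..<n+1]);
           return_pmf (G @ [(n+1, i)]) })"

fun graphB :: "real \<Rightarrow> nat \<Rightarrow> graph pmf" where
  "graphB \<delta> 0 = return_pmf [(1,1)]"
| "graphB \<delta> (Suc 0) = return_pmf [(1,1)]"
| "graphB \<delta> (Suc (Suc m)) =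
     (let n = Suc m in
      do { G \<leftarrow> graphB \<delta> n;
           i \<leftarrow> pmf_of_list
                 (map (\<lambda>i. (i, (real (deg G i) + \<delta>) / ((2 + \<delta>) * real n + 1 + \<delta>))) [1..<n+1]
                  @ [(n+1, (1 + \<delta>) / ((2 + \<delta>) * real n + 1 + \<delta>))]);
           return_pmf (G @ [(n+1, i)]) })"

definition BI0 :: "nat \<Rightarrow> nat" where
  "BI0 i = (if i = 1 then 2 else 1)"

text \<open>Rate of the (k+1)-th holding time of process i (state BI0 i + k): q = j + delta.\<close>
definition BIrate :: "real \<Rightarrow> nat \<Rightarrow> nat \<Rightarrow> real" where
  "BIrate \<delta> i k = real (BI0 i + k) + \<delta>"

definition jump :: "(nat \<Rightarrow> nat \<Rightarrow> real) \<Rightarrow> nat \<Rightarrow> nat \<Rightarrow> real" where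
  "jump E i k = (\<Sum>j<k. E i j)"

definition BI :: "(nat \<Rightarrow> nat \<Rightarrow> real) \<Rightarrow> nat \<Rightarrow> real \<Rightarrow> nat" where
  "BI E i t = BI0 i + card {k. 1 \<le> k \<and> jump E i k \<le> t}"

text \<open>TAlist E m = [T_1,...,T_{m+1}] for Model A.\<close>
primrec TAlist :: "(nat \<Rightarrow> nat \<Rightarrow> real) \<Rightarrow> nat \<Rightarrow> real list" where
  "TAlist E 0 = [0]"
| "TAlist E (Suc m) =
     (let ts = TAlist E m in
      ts @ [Inf {ts ! (i - 1) + jump E i k | i k.
                   1 \<le> k \<and> 1 \<le> i \<and> i \<le> length ts \<and> ts ! (i - 1) + jump E i k > last ts}])"

definition TA :: "(nat \<Rightarrow> nat \<Rightarrow> real) \<Rightarrow> nat \<Rightarrow> real" where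
  "TA E n = TAlist E (n - 1) ! (n - 1)"

text \<open>TBlist E m = [T_0,T_1,...,T_{m+1}] for Model B.\<close>
primrec TBlist :: "(nat \<Rightarrow> nat \<Rightarrow> real) \<Rightarrow> nat \<Rightarrow> real list" where
  "TBlist E 0 = [0, 0]"
| "TBlist E (Suc m) =
     (let ts = TBlist E m in
      ts @ [Inf {ts ! (i - 1) + jump E i k | i k.
                   1 \<le> k \<and> 1 \<le> i \<and> i \<le> length ts \<and> ts ! (i - 1) + jump E i k > last ts}])"

definition TB :: "(nat \<Rightarrow> nat \<Rightarrow> real) \<Rightarrow> nat \<Rightarrow> real" where
  "TB E n = TBlist E (n - 1) ! n"

definition DtildeA :: "(nat \<Rightarrow> nat \<Rightarrow> real) \<Rightarrow> nat \<Rightarrow> nat list" where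
  "DtildeA E n = map (\<lambda>i. BI E i (TA E n - TA E i)) [1..<n+1]"

definition DtildeB :: "(nat \<Rightarrow> nat \<Rightarrow> real) \<Rightarrow> nat \<Rightarrow> nat list" where
  "DtildeB E n = map (\<lambda>i. BI E i (TB E n - TB E (i - 1))) [1..<n+1]"

end

theory Submission
  imports Defs
begin



definition addc :: "(nat \<Rightarrow> nat) \<Rightarrow> nat list \<Rightarrow> nat \<Rightarrow> nat" where
  "addc c ws = (\<lambda>i. c i + count_list ws i)"

definition stp :: "real \<Rightarrow> nat \<Rightarrow> (nat \<Rightarrow> nat) \<Rightarrow> nat pmf" where
  "stp \<delta> a c = pmf_of_list (map (\<lambda>i. (i, BIrate \<delta> i (c i) / (\<Sum>j=1..a. BIrate \<delta> j (c j)))) [1..<a+1])"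

fun wB :: "real \<Rightarrow> nat \<Rightarrow> (nat \<Rightarrow> nat) \<Rightarrow> nat \<Rightarrow> nat list pmf" where
  "wB \<delta> a c 0 = return_pmf []"
| "wB \<delta> a c (Suc n) = do { w \<leftarrow> stp \<delta> a c; ws \<leftarrow> wB \<delta> (Suc a) (c(w := Suc (c w))) n; return_pmf (w # ws) }"

lemma addc_Nil[simp]: "addc c [] = c" by (simp add: addc_def)
lemma addc_Cons[simp]: "addc c (w # ws) = addc (c(w := Suc (c w))) ws"
  by (auto simp: addc_def fun_eq_iff)

lemma wB_snoc:
  "wB \<delta> a c (Suc n) = do { ws \<leftarrow> wB \<delta> a c n; w \<leftarrow> stp \<delta> (a+n) (addc c ws); return_pmf (ws @ [w]) }"
proof (induction n arbitrary: a c)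
  case 0
  then show ?case by (simp add: bind_return_pmf bind_assoc_pmf)
next
  case (Suc n)
  show ?case
    apply (subst wB.simps)
    apply (subst Suc)
    apply (simp add: bind_return_pmf bind_assoc_pmf)
    done
qed

lemma BIrate_pos: "\<delta> > -1 \<Longrightarrow> BIrate \<delta> i k > 0"
  by (simp add: BIrate_def BI0_def)

lemma stp_wf: assumes "\<delta> > -1" "a \<ge> 1"
  shows "pmf_of_list_wf (map (\<lambda>i. (i, BIrate \<delta> i (c i) / (\<Sum>j=1..a. BIrate \<delta> j (c j)))) [1..<a+1])"
proof -
  have pos: "(\<Sum>j=1..a. BIrate \<delta> j (c j)) > 0"
    using assms by (intro sum_pos) (auto simp: BIrate_pos)
  have "sum_list (map (\<lambda>i. BIrate \<delta> i (c i) / (\<Sum>j=1..a. BIrate \<delta> j (c j))) [1..<a+1])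
        = (\<Sum>i\<in>set [1..<a+1]. BIrate \<delta> i (c i) / (\<Sum>j=1..a. BIrate \<delta> j (c j)))"
    by (rule sum_set_upt_conv_sum_list_nat[symmetric])
  also have "set [1..<a+1] = {1..a}" by (auto simp del: upt_Suc)
  also have "(\<Sum>i\<in>{1..a}. BIrate \<delta> i (c i) / (\<Sum>j=1..a. BIrate \<delta> j (c j)))
     = (\<Sum>i=1..a. BIrate \<delta> i (c i)) / (\<Sum>j=1..a. BIrate \<delta> j (c j))"
    by (simp only: sum_divide_distrib)
  also have "\<dots> = 1" by (rule divide_self) (use pos in auto)
  finally show ?thesis using assms pos
    by (intro pmf_of_list_wfI)
       (auto simp: o_def simp del: upt_Suc intro!: divide_nonneg_pos less_imp_le[OF BIrate_pos])
qed

lemma set_stp: assumes "\<delta> > -1" "a \<ge> 1"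
  shows "set_pmf (stp \<delta> a c) \<subseteq> {1..a}"
proof -
  have "set_pmf (stp \<delta> a c) \<subseteq> set (map fst (map (\<lambda>i. (i, BIrate \<delta> i (c i) / (\<Sum>j=1..a. BIrate \<delta> j (c j)))) [1..<a+1]))"
    unfolding stp_def by (rule set_pmf_of_list[OF stp_wf[OF assms]])
  also have "\<dots> = {1..a}" by (auto simp del: upt_Suc)
  finally show ?thesis .
qed

lemma pmf_stp: assumes "\<delta> > -1" "a \<ge> 1"
  shows "pmf (stp \<delta> a c) w = (if w \<in> {1..a} then BIrate \<delta> w (c w) / (\<Sum>j=1..a. BIrate \<delta> j (c j)) else 0)"
proof -
  have "pmf (stp \<delta> a c) w = sum_list (map snd (filter (\<lambda>z. fst z = w)
     (map (\<lambda>i. (i, BIrate \<delta> i (c i) / (\<Sum>j=1..a. BIrate \<delta> j (c j)))) [1..<a+1])))"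
    unfolding stp_def by (rule pmf_pmf_of_list[OF stp_wf[OF assms]])
  also have "filter (\<lambda>z. fst z = w) (map (\<lambda>i. (i, BIrate \<delta> i (c i) / (\<Sum>j=1..a. BIrate \<delta> j (c j)))) [1..<a+1])
     = map (\<lambda>i. (i, BIrate \<delta> i (c i) / (\<Sum>j=1..a. BIrate \<delta> j (c j)))) (filter (\<lambda>i. i = w) [1..<a+1])"
    by (simp add: filter_map o_def)
  also have "filter (\<lambda>i. i = w) [1..<a+1] = (if w \<in> {1..a} then [w] else [])"
    by (induction a) auto
  finally show ?thesis by auto
qed

lemma set_wB: assumes "\<delta> > -1" "a \<ge> 1"
  shows "ws \<in> set_pmf (wB \<delta> a c n) \<Longrightarrow> length ws = n \<and> (\<forall>j<n. ws ! j \<in> {1..a+j})"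
  using assms
proof (induction n arbitrary: a c ws)
  case 0 then show ?case by simp
next
  case (Suc n)
  from Suc.prems obtain w ws' where w: "w \<in> set_pmf (stp \<delta> a c)"
    and ws': "ws' \<in> set_pmf (wB \<delta> (Suc a) (c(w := Suc (c w))) n)" and ws: "ws = w # ws'" by auto
  have "w \<in> {1..a}" using set_stp[OF Suc.prems(2,3), of c] w by blast
  moreover have "length ws' = n \<and> (\<forall>j<n. ws' ! j \<in> {1..Suc a+j})"
    using Suc.IH[OF ws'] Suc.prems by auto
  ultimately show ?case unfolding ws
  proof (intro conjI allI impI)
    fix j assume j: "j < Suc n"
    show "(w # ws') ! j \<in> {1..a + j}"
    proof (cases j)
      case 0 then show ?thesis using \<open>w \<in> {1..a}\<close> by simp
    next
      case (Suc j')
      then have "ws' ! j' \<in> {1..Suc a + j'}" using j \<open>length ws' = n \<and> (\<forall>j<n. ws' ! j \<in> {1..Suc a+j})\<close> by auto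
      then show ?thesis using Suc by simp
    qed
  qed simp
qed

definition gr :: "nat list \<Rightarrow> graph" where
  "gr ws = (1,1) # map (\<lambda>m. (Suc (Suc m), ws ! m)) [0..<length ws]"

lemma gr_Nil: "gr [] = [(1,1)]" by (simp add: gr_def)
lemma gr_snoc: "gr (ws @ [w]) = gr ws @ [(length ws + 2, w)]"
  by (simp add: gr_def nth_append)

lemma len_filter_upt2: "length (filter (\<lambda>m. Suc (Suc m) = v) [0..<L]) = (if 2 \<le> v \<and> v \<le> Suc L then 1 else 0)"
proof -
  have "length (filter (\<lambda>m. Suc (Suc m) = v) [0..<L]) = card {m. m < L \<and> Suc (Suc m) = v}"
    by (auto simp: length_filter_conv_card intro!: arg_cong[where f=card])
  also have "{m. m < L \<and> Suc (Suc m) = v} = (if 2 \<le> v \<and> v \<le> Suc L then {v - 2} else {})"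
    by auto
  finally show ?thesis by simp
qed

lemma deg_gr: assumes "1 \<le> v" "v \<le> Suc (length ws)"
  shows "deg (gr ws) v = BI0 v + count_list ws v"
proof -
  have f1: "length (filter (\<lambda>e. fst e = v) (gr ws)) = 1"
  proof -
    have "length (filter (\<lambda>e. fst e = v) (gr ws)) = (if v = 1 then 1 else 0) + length (filter (\<lambda>m. Suc (Suc m) = v) [0..<length ws])"
      unfolding gr_def filter.simps length_filter_map by (simp add: o_def del: upt_Suc)
    then show ?thesis using assms by (simp only: len_filter_upt2) auto
  qed
  have f2: "length (filter (\<lambda>e. snd e = v) (gr ws)) = (if v = 1 then 1 else 0) + count_list ws v"
  proof -
    have "map (\<lambda>m. ws ! m) [0..<length ws] = ws" by (simp add: map_nth)
    then have "length (filter (\<lambda>m. ws ! m = v) [0..<length ws]) = count_list ws v"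
    proof -
      have "length (filter (\<lambda>m. ws ! m = v) [0..<length ws]) = length (filter ((=) v) (map (\<lambda>m. ws ! m) [0..<length ws]))"
        unfolding length_filter_map o_def by (intro arg_cong[where f=length] filter_cong) auto
      then show ?thesis using \<open>map (\<lambda>m. ws ! m) [0..<length ws] = ws\<close> by (simp add: count_list_eq_length_filter)
    qed
    moreover have "length (filter (\<lambda>e. snd e = v) (gr ws)) = (if v = 1 then 1 else 0) + length (filter (\<lambda>m. ws ! m = v) [0..<length ws])"
      unfolding gr_def filter.simps length_filter_map by (simp add: o_def del: upt_Suc)
    ultimately show ?thesis by simp
  qed
  show ?thesis unfolding deg_def f1 f2 BI0_def by simp
qed


lemma sum_BI0: "N \<ge> 1 \<Longrightarrow> (\<Sum>j=1..N. real (BI0 j)) = real N + 1"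
proof (induction N)
  case 0 then show ?case by simp
next
  case (Suc N)
  show ?case
  proof (cases "N = 0")
    case True then show ?thesis by (simp add: BI0_def)
  next
    case False
    then have "(\<Sum>j=1..Suc N. real (BI0 j)) = (\<Sum>j=1..N. real (BI0 j)) + real (BI0 (Suc N))"
      by simp
    also have "\<dots> = real N + 1 + 1" using Suc False by (simp add: BI0_def)
    finally show ?thesis by simp
  qed
qed

lemma sum_BIrate:
  assumes "set ws \<subseteq> {1..N}" "N \<ge> 1"
  shows "(\<Sum>j=1..N. BIrate \<delta> j (addc (\<lambda>_. 0) ws j)) = real N + 1 + real (length ws) + real N * \<delta>"
proof -
  have "(\<Sum>j=1..N. BIrate \<delta> j (addc (\<lambda>_. 0) ws j)) = (\<Sum>j=1..N. real (BI0 j) + real (count_list ws j) + \<delta>)"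
    by (simp add: BIrate_def addc_def)
  also have "\<dots> = (\<Sum>j=1..N. real (BI0 j)) + (\<Sum>j=1..N. real (count_list ws j)) + real N * \<delta>"
    by (simp add: sum.distrib)
  also have "(\<Sum>j=1..N. real (count_list ws j)) = real (length ws)"
    using sum_count_set[OF assms(1)] by (metis finite_atLeastAtMost of_nat_sum)
  finally show ?thesis using sum_BI0[OF assms(2)] by simp
qed

lemma set_wB': assumes "\<delta> > -1" "a \<ge> 1" "ws \<in> set_pmf (wB \<delta> a c n)"
  shows "length ws = n" "set ws \<subseteq> {1..a + n - 1}"
proof -
  have h: "length ws = n \<and> (\<forall>j<n. ws ! j \<in> {1..a+j})" by (rule set_wB[OF assms])
  then show "length ws = n" by simp
  show "set ws \<subseteq> {1..a + n - 1}"
  proof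
    fix x assume "x \<in> set ws"
    then obtain j where "j < length ws" "ws ! j = x" by (auto simp: in_set_conv_nth)
    then show "x \<in> {1..a + n - 1}" using h by fastforce
  qed
qed

lemma lenAB: assumes "\<delta> > -1"
  shows "ws \<in> set_pmf (wB \<delta> 1 c m) \<Longrightarrow> length ws = m"
    and "ws \<in> set_pmf (wB \<delta> 2 c m) \<Longrightarrow> length ws = m"
  by (rule set_wB'(1)[OF assms]; simp)+

lemma graphA_eq: assumes "\<delta> > -1"
  shows "graphA \<delta> (Suc m) = map_pmf gr (wB \<delta> 1 (\<lambda>_. 0) m)"
proof (induction m)
  case 0 then show ?case by (simp add: gr_Nil)
next
  case (Suc m)
  have L: "pmf_of_list (map (\<lambda>i. (i, (real (deg (gr ws) i) + \<delta>) / ((2 + \<delta>) * real (Suc m)))) [1..<Suc m+1])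
      = stp \<delta> (1 + m) (addc (\<lambda>_. 0) ws)" if ws: "ws \<in> set_pmf (wB \<delta> 1 (\<lambda>_. 0) m)" for ws
  proof -
    note W = set_wB'[OF assms _ ws]
    have W2: "set ws \<subseteq> {1..1+m}" using W(2) by auto
    have den: "(\<Sum>j=1..1+m. BIrate \<delta> j (addc (\<lambda>_. 0) ws j)) = (2 + \<delta>) * real (Suc m)"
      using sum_BIrate[OF W2, of \<delta>] W(1) by (simp add: algebra_simps)
    show ?thesis unfolding stp_def den
      by (intro arg_cong[where f=pmf_of_list] map_cong refl)
         (use W in \<open>auto simp: deg_gr BIrate_def addc_def simp del: upt_Suc\<close>)
  qed
  have "graphA \<delta> (Suc (Suc m)) = graphA \<delta> (Suc m) \<bind> (\<lambda>G. pmf_of_list (map (\<lambda>i. (i, (real (deg G i) + \<delta>) / ((2 + \<delta>) * real (Suc m)))) [1..<Suc m+1]) \<bind> (\<lambda>i. return_pmf (G @ [(Suc m + 1, i)])))"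
    by (simp add: Let_def del: upt_Suc)
  also have "\<dots> = wB \<delta> 1 (\<lambda>_. 0) m \<bind> (\<lambda>ws. stp \<delta> (1 + m) (addc (\<lambda>_. 0) ws) \<bind> (\<lambda>i. return_pmf (gr ws @ [(Suc m + 1, i)])))"
    unfolding Suc map_pmf_def bind_assoc_pmf bind_return_pmf
    by (intro bind_pmf_cong refl) (erule L)
  also have "\<dots> = map_pmf gr (wB \<delta> 1 (\<lambda>_. 0) (Suc m))"
    unfolding wB_snoc map_pmf_def bind_assoc_pmf bind_return_pmf
    by (intro bind_pmf_cong refl) (auto simp: gr_snoc lenAB[OF assms])
  finally show ?case .
qed

lemma graphB_eq: assumes "\<delta> > -1"
  shows "graphB \<delta> (Suc m) = map_pmf gr (wB \<delta> 2 (\<lambda>_. 0) m)"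
proof (induction m)
  case 0 then show ?case by (simp add: gr_Nil)
next
  case (Suc m)
  have L: "pmf_of_list (map (\<lambda>i. (i, (real (deg (gr ws) i) + \<delta>) / ((2 + \<delta>) * real (Suc m) + 1 + \<delta>))) [1..<Suc m+1]
              @ [(Suc m + 1, (1 + \<delta>) / ((2 + \<delta>) * real (Suc m) + 1 + \<delta>))])
      = stp \<delta> (2 + m) (addc (\<lambda>_. 0) ws)" if ws: "ws \<in> set_pmf (wB \<delta> 2 (\<lambda>_. 0) m)" for ws
  proof -
    note W = set_wB'[OF assms _ ws]
    have W2: "set ws \<subseteq> {1..2+m}" using W(2) by auto
    have den: "(\<Sum>j=1..2+m. BIrate \<delta> j (addc (\<lambda>_. 0) ws j)) = (2 + \<delta>) * real (Suc m) + 1 + \<delta>"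
      using sum_BIrate[OF W2, of \<delta>] W(1) by (simp add: algebra_simps)
    have cnt0: "count_list ws (Suc (Suc m)) = 0" using W by (auto simp: count_list_0_iff)
    have up: "[1..<2+m+1] = [1..<Suc m+1] @ [Suc m + 1]" by simp
    show ?thesis unfolding stp_def den up map_append
      by (intro arg_cong[where f=pmf_of_list] arg_cong2[where f=append] map_cong refl)
         (use W cnt0 in \<open>auto simp: deg_gr BIrate_def addc_def BI0_def simp del: upt_Suc\<close>)
  qed
  have "graphB \<delta> (Suc (Suc m)) = graphB \<delta> (Suc m) \<bind> (\<lambda>G. pmf_of_list (map (\<lambda>i. (i, (real (deg G i) + \<delta>) / ((2 + \<delta>) * real (Suc m) + 1 + \<delta>))) [1..<Suc m+1]
              @ [(Suc m + 1, (1 + \<delta>) / ((2 + \<delta>) * real (Suc m) + 1 + \<delta>))]) \<bind> (\<lambda>i. return_pmf (G @ [(Suc m + 1, i)])))"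
    by (simp add: Let_def del: upt_Suc)
  also have "\<dots> = wB \<delta> 2 (\<lambda>_. 0) m \<bind> (\<lambda>ws. stp \<delta> (2 + m) (addc (\<lambda>_. 0) ws) \<bind> (\<lambda>i. return_pmf (gr ws @ [(Suc m + 1, i)])))"
    unfolding Suc map_pmf_def bind_assoc_pmf bind_return_pmf
    by (intro bind_pmf_cong refl) (erule L)
  also have "\<dots> = map_pmf gr (wB \<delta> 2 (\<lambda>_. 0) (Suc m))"
    unfolding wB_snoc map_pmf_def bind_assoc_pmf bind_return_pmf
    by (intro bind_pmf_cong refl) (auto simp: gr_snoc lenAB[OF assms])
  finally show ?case .
qed

definition dvec :: "nat \<Rightarrow> nat list \<Rightarrow> nat list" where
  "dvec n ws = map (\<lambda>i. BI0 i + count_list ws i) [1..<n+1]"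

lemma degseq_gr: "length ws = n - 1 \<Longrightarrow> n \<ge> 1 \<Longrightarrow> degseq n (gr ws) = dvec n ws"
  unfolding degseq_def dvec_def by (intro map_cong refl) (auto simp: deg_gr simp del: upt_Suc)

lemma pmfA: assumes "\<delta> > -1" "n \<ge> 1"
  shows "map_pmf (degseq n) (graphA \<delta> n) = map_pmf (dvec n) (wB \<delta> 1 (\<lambda>_. 0) (n - 1))"
proof -
  have e: "graphA \<delta> n = map_pmf gr (wB \<delta> 1 (\<lambda>_. 0) (n - 1))"
    using graphA_eq[OF assms(1), of "n - 1"] assms(2) by simp
  have len: "\<And>ws. ws \<in> set_pmf (wB \<delta> 1 (\<lambda>_. 0) (n - 1)) \<Longrightarrow> length ws = n - 1"
    using lenAB[OF assms(1)] by simp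
  show ?thesis unfolding e pmf.map_comp o_def
    by (intro map_pmf_cong refl degseq_gr len assms(2))
qed

lemma pmfB: assumes "\<delta> > -1" "n \<ge> 1"
  shows "map_pmf (degseq n) (graphB \<delta> n) = map_pmf (dvec n) (wB \<delta> 2 (\<lambda>_. 0) (n - 1))"
proof -
  have e: "graphB \<delta> n = map_pmf gr (wB \<delta> 2 (\<lambda>_. 0) (n - 1))"
    using graphB_eq[OF assms(1), of "n - 1"] assms(2) by simp
  have len: "\<And>ws. ws \<in> set_pmf (wB \<delta> 2 (\<lambda>_. 0) (n - 1)) \<Longrightarrow> length ws = n - 1"
    using lenAB[OF assms(1)] by simp
  show ?thesis unfolding e pmf.map_comp o_def
    by (intro map_pmf_cong refl degseq_gr len assms(2))
qed




definition ExpM :: "real \<Rightarrow> real measure" where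
  "ExpM r = density lborel (\<lambda>x. ennreal (exponential_density r x))"

lemma sets_Ex[simp, measurable_cong]: "sets (ExpM r) = sets borel"
  by (simp add: ExpM_def)
lemma space_Ex[simp]: "space (ExpM r) = UNIV"
  by (simp add: ExpM_def)
lemma prob_Ex: "r > 0 \<Longrightarrow> prob_space (ExpM r)"
  unfolding ExpM_def by (rule prob_space_exponential_density)

lemma emeasure_Ex: assumes "G \<in> sets borel"
  shows "emeasure (ExpM r) G = (\<integral>\<^sup>+ y. ennreal (exponential_density r y) * indicator G y \<partial>lborel)"
  unfolding ExpM_def using assms by (subst emeasure_density) auto

lemma Ex_memoryless:
  assumes r: "r > 0" and t: "t \<ge> 0" and G: "G \<in> sets borel"
  shows "emeasure (ExpM r) {y. t < y \<and> y - t \<in> G} = ennreal (exp (- r * t)) * emeasure (ExpM r) {y. 0 < y \<and> y \<in> G}"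
proof -
  have m1: "{y. t < y \<and> y - t \<in> G} \<in> sets borel" using G by measurable
  have m2: "{y::real. 0 < y \<and> y \<in> G} \<in> sets borel" using G by measurable
  let ?g = "\<lambda>y. ennreal (exponential_density r y) * indicator {y. t < y \<and> y - t \<in> G} y"
  have "emeasure (ExpM r) {y. t < y \<and> y - t \<in> G} = (\<integral>\<^sup>+ y. ?g y \<partial>lborel)"
    by (rule emeasure_Ex[OF m1])
  also have "\<dots> = (\<integral>\<^sup>+ y. ?g y \<partial>distr lborel borel ((+) t))"
    by (simp add: lborel_distr_plus)
  also have "\<dots> = (\<integral>\<^sup>+ z. ?g (t + z) \<partial>lborel)"
    using m1 by (intro nn_integral_distr) (auto simp: lborel_distr_plus)
  also have "\<dots> = (\<integral>\<^sup>+ z. ennreal (exp (- r * t)) * (ennreal (exponential_density r z) * indicator {y. 0 < y \<and> y \<in> G} z) \<partial>lborel)"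
  proof (intro nn_integral_cong)
    fix z :: real
    show "?g (t + z) = ennreal (exp (- r * t)) * (ennreal (exponential_density r z) * indicator {y. 0 < y \<and> y \<in> G} z)"
    proof (cases "0 < z \<and> z \<in> G")
      case True
      then have "exponential_density r (t + z) = exp (- r * t) * exponential_density r z"
        using t by (simp add: exponential_density_def algebra_simps mult_exp_exp)
      then show ?thesis using True exponential_density_nonneg[OF r, of z]
        by (simp add: indicator_def ennreal_mult mult_ac)
    next
      case False then show ?thesis by (auto simp: indicator_def)
    qed
  qed
  also have "\<dots> = ennreal (exp (- r * t)) * (\<integral>\<^sup>+ z. ennreal (exponential_density r z) * indicator {y. 0 < y \<and> y \<in> G} z \<partial>lborel)"
    using m2 by (intro nn_integral_cmult) auto
  also have "\<dots> = ennreal (exp (- r * t)) * emeasure (ExpM r) {y. 0 < y \<and> y \<in> G}"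
    by (simp add: emeasure_Ex[OF m2])
  finally show ?thesis .
qed

lemma Ex_pos_part: assumes r: "r > 0" and G: "G \<in> sets borel"
  shows "emeasure (ExpM r) {y. 0 < y \<and> y \<in> G} = emeasure (ExpM r) G"
proof -
  have m2: "{y::real. 0 < y \<and> y \<in> G} \<in> sets borel" using G by measurable
  have "emeasure (ExpM r) {y. 0 < y \<and> y \<in> G} = (\<integral>\<^sup>+ y. ennreal (exponential_density r y) * indicator {y. 0 < y \<and> y \<in> G} y \<partial>lborel)"
    by (rule emeasure_Ex[OF m2])
  also have "\<dots> = (\<integral>\<^sup>+ y. ennreal (exponential_density r y) * indicator G y \<partial>lborel)"
  proof (rule nn_integral_cong_AE)
    have "AE y in lborel. y \<noteq> 0" by (rule AE_lborel_singleton)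
    then show "AE y in lborel. ennreal (exponential_density r y) * indicator {y. 0 < y \<and> y \<in> G} y = ennreal (exponential_density r y) * indicator G y"
      by eventually_elim (auto simp: indicator_def exponential_density_def)
  qed
  also have "\<dots> = emeasure (ExpM r) G" using G by (simp add: emeasure_Ex)
  finally show ?thesis .
qed

lemma Ex_space: "r > 0 \<Longrightarrow> emeasure (ExpM r) UNIV = 1"
  using prob_space.emeasure_space_1[OF prob_Ex] by simp

lemma Ex_outer:
  assumes r: "r > 0" and s: "s \<ge> 0"
  shows "(\<integral>\<^sup>+ t. ennreal (exp (- s * t)) \<partial>ExpM r) = ennreal (r / (r + s))"
proof -
  have "(\<integral>\<^sup>+ t. ennreal (exp (- s * t)) \<partial>ExpM r) = (\<integral>\<^sup>+ t. ennreal (exponential_density r t) * ennreal (exp (- s * t)) \<partial>lborel)"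
    unfolding ExpM_def by (subst nn_integral_density) auto
  also have "\<dots> = (\<integral>\<^sup>+ t. ennreal (r / (r + s)) * ennreal (exponential_density (r + s) t) \<partial>lborel)"
  proof (intro nn_integral_cong)
    fix t :: real
    have "exponential_density r t * exp (- s * t) = r / (r + s) * exponential_density (r + s) t"
      using r s by (auto simp: exponential_density_def field_simps mult_exp_exp)
    then show "ennreal (exponential_density r t) * ennreal (exp (- s * t)) = ennreal (r / (r + s)) * ennreal (exponential_density (r + s) t)"
      using r s by (simp add: ennreal_mult'[symmetric] exponential_density_nonneg)
  qed
  also have "\<dots> = ennreal (r / (r + s)) * (\<integral>\<^sup>+ t. ennreal (exponential_density (r + s) t) \<partial>lborel)"
    by (intro nn_integral_cmult) auto
  also have "(\<integral>\<^sup>+ t. ennreal (exponential_density (r + s) t) \<partial>lborel) = emeasure (ExpM (r + s)) UNIV"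
    using emeasure_Ex[of UNIV "r + s"] by simp
  also have "\<dots> = 1" using r s by (intro Ex_space) simp
  finally show ?thesis by simp
qed




definition II :: "(nat \<times> nat) set" where "II = {p. 1 \<le> fst p}"

definition rt :: "real \<Rightarrow> (nat \<Rightarrow> nat) \<Rightarrow> nat \<times> nat \<Rightarrow> real" where
  "rt \<delta> c p = BIrate \<delta> (fst p) (c (fst p) + snd p)"

definition PS :: "real \<Rightarrow> (nat \<Rightarrow> nat) \<Rightarrow> (nat \<times> nat \<Rightarrow> real) measure" where
  "PS \<delta> c = PiM II (\<lambda>p. ExpM (rt \<delta> c p))"

definition win :: "nat \<Rightarrow> (nat \<times> nat \<Rightarrow> real) \<Rightarrow> nat \<Rightarrow> bool" where
  "win a F w \<longleftrightarrow> w \<in> {1..a} \<and> (\<forall>i\<in>{1..a}. i \<noteq> w \<longrightarrow> F (w, 0) < F (i, 0))"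

definition sh :: "nat \<Rightarrow> nat \<Rightarrow> (nat \<times> nat \<Rightarrow> real) \<Rightarrow> (nat \<times> nat \<Rightarrow> real)" where
  "sh a w F = (\<lambda>p\<in>II. if fst p = w then F (w, Suc (snd p))
                      else if fst p \<le> a \<and> snd p = 0 then F p - F (w, 0) else F p)"

lemma rt_pos: "\<delta> > -1 \<Longrightarrow> rt \<delta> c p > 0"
  by (simp add: rt_def BIrate_pos)

lemma prob_PS: "\<delta> > -1 \<Longrightarrow> prob_space (PS \<delta> c)"
  unfolding PS_def by (intro prob_space_PiM prob_Ex rt_pos)

lemma sets_PS: "sets (PS \<delta> c) = sets (PiM II (\<lambda>_. borel))"
  unfolding PS_def by (intro sets_PiM_cong) auto

lemma space_PS: "space (PS \<delta> c) = space (PiM II (\<lambda>_. borel :: real measure))"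
  unfolding PS_def by (simp add: space_PiM)

lemma win_unique: "win a F w \<Longrightarrow> win a F w' \<Longrightarrow> w = w'"
  unfolding win_def by force

lemma meas_win: "{F \<in> space (PiM II (\<lambda>_. borel :: real measure)). win a F w} \<in> sets (PiM II (\<lambda>_. borel))"
proof (cases "w \<in> {1..a}")
  case True
  have [measurable]: "(\<lambda>F. F (i, 0)) \<in> borel_measurable (PiM II (\<lambda>_. borel :: real measure))" if "1 \<le> i" for i
    using that by (intro measurable_component_singleton) (auto simp: II_def)
  show ?thesis unfolding win_def using True by measurable
next
  case False then show ?thesis by (simp add: win_def)
qed

lemma meas_sh: "sh a w \<in> measurable (PiM II (\<lambda>_. borel :: real measure)) (PiM II (\<lambda>_. borel))"
  if "w \<ge> 1"
proof -
  have c: "(\<lambda>F. F q) \<in> borel_measurable (PiM II (\<lambda>_. borel :: real measure))" if "q \<in> II" for q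
    using that by (intro measurable_component_singleton)
  show ?thesis unfolding sh_def
  proof (rule measurable_restrict)
    fix p assume p: "p \<in> II"
    have w0: "(w, 0) \<in> II" "(w, Suc (snd p)) \<in> II" using \<open>w \<ge> 1\<close> by (auto simp: II_def)
    show "(\<lambda>F. if fst p = w then F (w, Suc (snd p)) else if fst p \<le> a \<and> snd p = 0 then F p - F (w, 0) else F p)
       \<in> borel_measurable (PiM II (\<lambda>_. borel :: real measure))"
      using c[OF p] c[OF w0(1)] c[OF w0(2)] by (cases "fst p = w"; cases "fst p \<le> a \<and> snd p = 0") (simp_all add: borel_measurable_diff)
  qed
qed




lemma PPS: assumes "\<delta> > -1" shows "product_prob_space (\<lambda>p. ExpM (rt \<delta> c p))"
proof -
  have "prob_space (ExpM (rt \<delta> c p))" for p by (intro prob_Ex rt_pos assms)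
  then show ?thesis
    by (simp add: product_prob_space_def product_sigma_finite_def product_prob_space_axioms_def
          prob_space_imp_sigma_finite)
qed

lemma PSF: assumes "\<delta> > -1" shows "product_sigma_finite (\<lambda>p. ExpM (rt \<delta> c p))"
  using PPS[OF assms] by (simp add: product_prob_space_def)

lemma AE_Ex_nonneg: "AE t in ExpM r. 0 \<le> t"
  unfolding ExpM_def by (subst AE_density) (auto simp: exponential_density_def)

lemma cyl:
  fixes \<delta> :: real and c :: "nat \<Rightarrow> nat"
  assumes \<delta>: "\<delta> > -1" and a: "a \<ge> 1" and w: "w \<in> {1..a}" and J: "finite J" "J \<subseteq> II"
    and A: "\<And>j. j \<in> J \<Longrightarrow> A j \<in> sets borel"
  shows "emeasure (PS \<delta> c) {F \<in> space (PS \<delta> c). win a F w \<and> (\<forall>j\<in>J. sh a w F j \<in> A j)}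
    = ennreal (rt \<delta> c (w,0) / (\<Sum>i=1..a. rt \<delta> c (i,0))) * (\<Prod>j\<in>J. emeasure (ExpM (rt \<delta> (c(w := Suc (c w))) j)) (A j))"
proof -
  define r where "r = rt \<delta> c"
  define r' where "r' = rt \<delta> (c(w := Suc (c w)))"
  define M where "M = (\<lambda>p. ExpM (r p))"
  have rpos: "\<And>p. r p > 0" unfolding r_def by (rule rt_pos[OF \<delta>])
  interpret P: product_prob_space M II unfolding M_def r_def by (rule PPS[OF \<delta>])
  have PSM: "PS \<delta> c = PiM II M" unfolding PS_def M_def r_def ..
  define A0 where "A0 = (\<lambda>i. (i, 0::nat)) ` {1..a}"
  define A0' where "A0' = A0 - {(w,0)}"
  define Jw where "Jw = {j\<in>J. fst j = w}"
  define J2 where "J2 = (\<lambda>j. (w, Suc (snd j))) ` Jw"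
  define J1 where "J1 = {j\<in>J. fst j \<noteq> w \<and> j \<notin> A0}"
  define K' where "K' = A0' \<union> J1 \<union> J2"
  define K where "K = insert (w,0) K'"
  define G where "G = (\<lambda>l. if l \<in> J then A l else UNIV)"
  define B where "B = (\<lambda>t l. if l \<in> A0' then {y. t < y \<and> y - t \<in> G l} else if l \<in> J2 then A (w, snd l - 1) else A l)"
  have finA0': "finite A0'" unfolding A0'_def A0_def by simp
  have finJw: "finite Jw" unfolding Jw_def using J by simp
  have finJ1: "finite J1" unfolding J1_def using J by simp
  have finJ2: "finite J2" unfolding J2_def using finJw by simp
  have finK': "finite K'" unfolding K'_def using finA0' finJ1 finJ2 by simp
  have finK: "finite K" unfolding K_def using finK' by simp
  have wK': "(w,0) \<notin> K'" unfolding K'_def A0'_def J1_def J2_def by auto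
  have KII: "K \<subseteq> II" unfolding K_def K'_def A0'_def A0_def J1_def J2_def Jw_def II_def
    using w J(2) by (auto simp: II_def)
  have GA: "G l \<in> sets borel" for l unfolding G_def using A by auto
  have Bm: "B t l \<in> sets borel" if l: "l \<in> K'" for t l
  proof -
    have "{y. t < y \<and> y - t \<in> G l} \<in> sets borel" using GA[of l] by measurable
    moreover have "A (w, snd l - 1) \<in> sets borel" if "l \<in> J2"
      using that A unfolding J2_def Jw_def by auto
    moreover have "A l \<in> sets borel" if "l \<notin> A0'" "l \<notin> J2"
      using that l A unfolding K'_def J1_def by auto
    ultimately show ?thesis unfolding B_def by auto
  qed
  define X where "X = {x \<in> space (PiM K M). (\<forall>l\<in>A0'. x (w,0) < x l \<and> x l - x (w,0) \<in> G l)
     \<and> (\<forall>l\<in>J1. x l \<in> A l) \<and> (\<forall>l\<in>J2. x l \<in> A (w, snd l - 1))}"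
  have comp: "(\<lambda>x. x l) \<in> borel_measurable (PiM K M)" if "l \<in> K" for l
    using measurable_component_singleton[OF that, of M] measurable_cong_sets[OF refl sets_Ex[of "r l"], of "PiM K M"]
    by (simp add: M_def)
  have XS: "X \<in> sets (PiM K M)"
  proof -
    have p1: "Measurable.pred (PiM K M) (\<lambda>x. \<forall>l\<in>A0'. x (w,0) < x l \<and> x l - x (w,0) \<in> G l)"
    proof (rule pred_intros_finite(3)[OF finA0'])
      fix l assume l: "l \<in> A0'"
      have [measurable]: "(\<lambda>x. x l) \<in> borel_measurable (PiM K M)"
        by (rule comp) (use l in \<open>auto simp: K_def K'_def\<close>)
      have [measurable]: "(\<lambda>x. x (w,0)) \<in> borel_measurable (PiM K M)"
        by (rule comp) (auto simp: K_def)
      have [measurable]: "G l \<in> sets borel" by (rule GA)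
      show "Measurable.pred (PiM K M) (\<lambda>x. x (w, 0) < x l \<and> x l - x (w, 0) \<in> G l)" by measurable
    qed
    have p2: "Measurable.pred (PiM K M) (\<lambda>x. \<forall>l\<in>J1. x l \<in> A l)"
    proof (rule pred_intros_finite(3)[OF finJ1])
      fix l assume l: "l \<in> J1"
      have [measurable]: "(\<lambda>x. x l) \<in> borel_measurable (PiM K M)"
        by (rule comp) (use l in \<open>auto simp: K_def K'_def\<close>)
      have [measurable]: "A l \<in> sets borel" using l A by (auto simp: J1_def)
      show "Measurable.pred (PiM K M) (\<lambda>x. x l \<in> A l)" by measurable
    qed
    have p3: "Measurable.pred (PiM K M) (\<lambda>x. \<forall>l\<in>J2. x l \<in> A (w, snd l - 1))"
    proof (rule pred_intros_finite(3)[OF finJ2])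
      fix l assume l: "l \<in> J2"
      have [measurable]: "(\<lambda>x. x l) \<in> borel_measurable (PiM K M)"
        by (rule comp) (use l in \<open>auto simp: K_def K'_def\<close>)
      have [measurable]: "A (w, snd l - 1) \<in> sets borel" using l A by (auto simp: J2_def Jw_def)
      show "Measurable.pred (PiM K M) (\<lambda>x. x l \<in> A (w, snd l - 1))" by measurable
    qed
    have "Measurable.pred (PiM K M) (\<lambda>x. (\<forall>l\<in>A0'. x (w,0) < x l \<and> x l - x (w,0) \<in> G l)
       \<and> (\<forall>l\<in>J1. x l \<in> A l) \<and> (\<forall>l\<in>J2. x l \<in> A (w, snd l - 1)))"
      by (rule pred_intros_logic(3)[OF p1 pred_intros_logic(3)[OF p2 p3]])
    then show ?thesis unfolding X_def pred_def .
  qed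
  have sp: "space (PS \<delta> c) = space (PiM II M)" by (simp add: PSM)
  have step1: "{F \<in> space (PS \<delta> c). win a F w \<and> (\<forall>j\<in>J. sh a w F j \<in> A j)} = prod_emb II M K X"
  proof (intro set_eqI iffI)
    fix F
    have winE: "win a F w \<longleftrightarrow> (\<forall>l\<in>A0'. F (w,0) < F l)" using w unfolding win_def A0'_def A0_def by auto
    have shj: "sh a w F j = (if fst j = w then F (w, Suc (snd j)) else if j \<in> A0' then F j - F (w,0) else F j)"
      if "j \<in> J" for j
      using that J(2) w unfolding sh_def A0'_def A0_def II_def by (cases j) (auto simp: image_iff)
    have shE: "(\<forall>j\<in>J. sh a w F j \<in> A j) \<longleftrightarrow>
       (\<forall>l\<in>A0'. F l - F (w,0) \<in> G l) \<and> (\<forall>l\<in>J1. F l \<in> A l) \<and> (\<forall>l\<in>J2. F l \<in> A (w, snd l - 1))"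
    proof
      assume H: "\<forall>j\<in>J. sh a w F j \<in> A j"
      show "(\<forall>l\<in>A0'. F l - F (w,0) \<in> G l) \<and> (\<forall>l\<in>J1. F l \<in> A l) \<and> (\<forall>l\<in>J2. F l \<in> A (w, snd l - 1))"
      proof (intro conjI ballI)
        fix l assume l: "l \<in> A0'"
        then have "fst l \<noteq> w" unfolding A0'_def A0_def by auto
        then show "F l - F (w,0) \<in> G l" using H shj l unfolding G_def by auto
      next
        fix l assume l: "l \<in> J1"
        then show "F l \<in> A l" using H shj unfolding J1_def A0'_def by auto
      next
        fix l assume l: "l \<in> J2"
        then obtain j where j: "j \<in> J" "fst j = w" "l = (w, Suc (snd j))" unfolding J2_def Jw_def by auto
        then have "(w, snd l - 1) = j" by (cases j) auto
        then show "F l \<in> A (w, snd l - 1)" using H shj j by auto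
      qed
    next
      assume H: "(\<forall>l\<in>A0'. F l - F (w,0) \<in> G l) \<and> (\<forall>l\<in>J1. F l \<in> A l) \<and> (\<forall>l\<in>J2. F l \<in> A (w, snd l - 1))"
      show "\<forall>j\<in>J. sh a w F j \<in> A j"
      proof
        fix j assume j: "j \<in> J"
        show "sh a w F j \<in> A j"
        proof (cases "fst j = w")
          case True
          then have "(w, Suc (snd j)) \<in> J2" using j unfolding J2_def Jw_def by auto
          then show ?thesis using H shj[OF j] True by (cases j) auto
        next
          case False
          show ?thesis
          proof (cases "j \<in> A0'")
            case True then show ?thesis using H shj[OF j] False j unfolding G_def by auto
          next
            case F2: False
            then have "j \<in> J1" using False j unfolding J1_def A0'_def by auto
            then show ?thesis using H shj[OF j] False F2 by auto
          qed
        qed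
      qed
    qed
    have embE: "F \<in> prod_emb II M K X \<longleftrightarrow> F \<in> space (PiM II M) \<and>
       (\<forall>l\<in>A0'. F (w,0) < F l \<and> F l - F (w,0) \<in> G l) \<and> (\<forall>l\<in>J1. F l \<in> A l) \<and> (\<forall>l\<in>J2. F l \<in> A (w, snd l - 1))"
      unfolding prod_emb_def X_def by (auto simp: space_PiM M_def K_def K'_def PiE_iff)
    show "F \<in> prod_emb II M K X" if "F \<in> {F \<in> space (PS \<delta> c). win a F w \<and> (\<forall>j\<in>J. sh a w F j \<in> A j)}"
      using that by (auto simp: embE winE shE sp)
    show "F \<in> {F \<in> space (PS \<delta> c). win a F w \<and> (\<forall>j\<in>J. sh a w F j \<in> A j)}" if "F \<in> prod_emb II M K X"
      using that by (auto simp: embE winE shE sp)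
  qed
  have step2: "emeasure (PS \<delta> c) (prod_emb II M K X) = emeasure (PiM K M) X"
    unfolding PSM by (rule P.emeasure_PiM_emb'[OF KII finK XS])
  interpret PSF: product_sigma_finite M by (rule P.product_sigma_finite_axioms)
  have step3: "emeasure (PiM K M) X = (\<integral>\<^sup>+ t. emeasure (PiM K' M) (PiE K' (B t)) \<partial>M (w,0))"
  proof -
    have "emeasure (PiM K M) X = (\<integral>\<^sup>+ x. indicator X x \<partial>PiM K M)"
      by (rule nn_integral_indicator[OF XS, symmetric])
    also have "\<dots> = (\<integral>\<^sup>+ t. (\<integral>\<^sup>+ y. indicator X (y((w,0) := t)) \<partial>PiM K' M) \<partial>M (w,0))"
      unfolding K_def by (rule P.product_nn_integral_insert_rev[OF finK' wK'])
         (use XS in \<open>simp add: K_def\<close>)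
    also have "\<dots> = (\<integral>\<^sup>+ t. emeasure (PiM K' M) (PiE K' (B t)) \<partial>M (w,0))"
    proof (intro nn_integral_cong)
      fix t
      have BS: "PiE K' (B t) \<in> sets (PiM K' M)"
        by (intro sets_PiM_I_finite finK') (simp add: M_def Bm)
      have "(\<integral>\<^sup>+ y. indicator X (y((w,0) := t)) \<partial>PiM K' M) = (\<integral>\<^sup>+ y. indicator (PiE K' (B t)) y \<partial>PiM K' M)"
      proof (intro nn_integral_cong)
        fix y assume y: "y \<in> space (PiM K' M)"
        then have yE: "y \<in> PiE K' (\<lambda>_. UNIV)" by (simp add: space_PiM M_def)
        have d1: "A0' \<inter> J2 = {}" "A0' \<inter> J1 = {}" "J1 \<inter> J2 = {}"
          unfolding A0'_def A0_def J2_def J1_def Jw_def by auto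
        have inS: "y((w,0) := t) \<in> space (PiM K M)" using yE wK' by (auto simp: space_PiM M_def K_def PiE_iff extensional_def)
        have upd: "\<And>l. l \<in> K' \<Longrightarrow> (y((w,0) := t)) l = y l" using wK' by auto
        have sub: "A0' \<subseteq> K'" "J1 \<subseteq> K'" "J2 \<subseteq> K'" unfolding K'_def by auto
        have e1: "y((w,0) := t) \<in> X \<longleftrightarrow> (\<forall>l\<in>A0'. t < y l \<and> y l - t \<in> G l) \<and> (\<forall>l\<in>J1. y l \<in> A l) \<and> (\<forall>l\<in>J2. y l \<in> A (w, snd l - 1))"
        proof -
          have "y((w,0) := t) \<in> X \<longleftrightarrow> (\<forall>l\<in>A0'. t < (y((w,0) := t)) l \<and> (y((w,0) := t)) l - t \<in> G l) \<and> (\<forall>l\<in>J1. (y((w,0) := t)) l \<in> A l) \<and> (\<forall>l\<in>J2. (y((w,0) := t)) l \<in> A (w, snd l - 1))"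
            unfolding X_def using inS by simp
          also have "\<dots> \<longleftrightarrow> (\<forall>l\<in>A0'. t < y l \<and> y l - t \<in> G l) \<and> (\<forall>l\<in>J1. y l \<in> A l) \<and> (\<forall>l\<in>J2. y l \<in> A (w, snd l - 1))"
            using upd sub by (intro conj_cong ball_cong refl) (auto simp del: fun_upd_apply)
          finally show ?thesis .
        qed
        have e2: "y \<in> PiE K' (B t) \<longleftrightarrow> (\<forall>l\<in>K'. y l \<in> B t l)" using yE by (auto simp: PiE_iff)
        have e3: "(\<forall>l\<in>K'. y l \<in> B t l) \<longleftrightarrow> (\<forall>l\<in>A0'. t < y l \<and> y l - t \<in> G l) \<and> (\<forall>l\<in>J1. y l \<in> A l) \<and> (\<forall>l\<in>J2. y l \<in> A (w, snd l - 1))"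
        proof -
          have b1: "B t l = {y. t < y \<and> y - t \<in> G l}" if "l \<in> A0'" for l using that unfolding B_def by simp
          have b2: "B t l = A l" if "l \<in> J1" for l using that d1 unfolding B_def by auto
          have b3: "B t l = A (w, snd l - 1)" if "l \<in> J2" for l using that d1 unfolding B_def by auto
          show ?thesis unfolding K'_def ball_Un using b1 b2 b3 by auto
        qed
        have "y((w,0) := t) \<in> X \<longleftrightarrow> y \<in> PiE K' (B t)" using e1 e2 e3 by simp
        then show "indicator X (y((w,0) := t)) = indicator (PiE K' (B t)) y"
          by (simp add: indicator_def)
      qed
      also have "\<dots> = emeasure (PiM K' M) (PiE K' (B t))" by (rule nn_integral_indicator[OF BS])
      finally show "(\<integral>\<^sup>+ y. indicator X (y((w,0) := t)) \<partial>PiM K' M) = emeasure (PiM K' M) (PiE K' (B t))" .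
    qed
    finally show ?thesis .
  qed
  define S where "S = (\<Sum>l\<in>A0'. r l)"
  define C where "C = (\<Prod>l\<in>A0'. emeasure (M l) (G l)) * (\<Prod>l\<in>J1. emeasure (M l) (A l)) * (\<Prod>l\<in>J2. emeasure (M l) (A (w, snd l - 1)))"
  have d1: "A0' \<inter> J2 = {}" "A0' \<inter> J1 = {}" "J1 \<inter> J2 = {}"
    unfolding A0'_def A0_def J2_def J1_def Jw_def by auto
  have Spos: "S \<ge> 0" unfolding S_def using rpos by (intro sum_nonneg) (simp add: less_imp_le)
  have step4: "emeasure (PiM K' M) (PiE K' (B t)) = ennreal (exp (- S * t)) * C" if t: "t \<ge> 0" for t
  proof -
    have "emeasure (PiM K' M) (PiE K' (B t)) = (\<Prod>l\<in>K'. emeasure (M l) (B t l))"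
      by (rule P.emeasure_PiM[OF finK']) (simp add: M_def Bm)
    also have "\<dots> = (\<Prod>l\<in>A0'. emeasure (M l) (B t l)) * (\<Prod>l\<in>J1. emeasure (M l) (B t l)) * (\<Prod>l\<in>J2. emeasure (M l) (B t l))"
    proof -
      have "(\<Prod>l\<in>K'. emeasure (M l) (B t l)) = (\<Prod>l\<in>A0' \<union> J1. emeasure (M l) (B t l)) * (\<Prod>l\<in>J2. emeasure (M l) (B t l))"
        unfolding K'_def by (rule prod.union_disjoint) (use finA0' finJ1 finJ2 d1 in auto)
      also have "(\<Prod>l\<in>A0' \<union> J1. emeasure (M l) (B t l)) = (\<Prod>l\<in>A0'. emeasure (M l) (B t l)) * (\<Prod>l\<in>J1. emeasure (M l) (B t l))"
        by (rule prod.union_disjoint) (use finA0' finJ1 d1 in auto)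
      finally show ?thesis .
    qed
    also have "(\<Prod>l\<in>A0'. emeasure (M l) (B t l)) = (\<Prod>l\<in>A0'. ennreal (exp (- r l * t)) * emeasure (M l) (G l))"
    proof (intro prod.cong refl)
      fix l assume l: "l \<in> A0'"
      have "emeasure (M l) (B t l) = emeasure (ExpM (r l)) {y. t < y \<and> y - t \<in> G l}"
        using l unfolding B_def M_def by simp
      also have "\<dots> = ennreal (exp (- r l * t)) * emeasure (ExpM (r l)) {y. 0 < y \<and> y \<in> G l}"
        by (rule Ex_memoryless[OF rpos t GA])
      also have "emeasure (ExpM (r l)) {y. 0 < y \<and> y \<in> G l} = emeasure (M l) (G l)"
        unfolding M_def by (rule Ex_pos_part[OF rpos GA])
      finally show "emeasure (M l) (B t l) = ennreal (exp (- r l * t)) * emeasure (M l) (G l)" .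
    qed
    also have "\<dots> = (\<Prod>l\<in>A0'. ennreal (exp (- r l * t))) * (\<Prod>l\<in>A0'. emeasure (M l) (G l))"
      by (rule prod.distrib)
    also have "(\<Prod>l\<in>A0'. ennreal (exp (- r l * t))) = ennreal (exp (- S * t))"
    proof -
      have "(\<Prod>l\<in>A0'. ennreal (exp (- r l * t))) = ennreal (\<Prod>l\<in>A0'. exp (- r l * t))"
        by (rule prod_ennreal) simp
      also have "(\<Prod>l\<in>A0'. exp (- r l * t)) = exp (\<Sum>l\<in>A0'. - r l * t)"
        by (rule exp_sum[OF finA0', symmetric])
      also have "(\<Sum>l\<in>A0'. - r l * t) = - S * t" unfolding S_def by (simp add: sum_distrib_right sum_negf)
      finally show ?thesis .
    qed
    also have "(\<Prod>l\<in>J1. emeasure (M l) (B t l)) = (\<Prod>l\<in>J1. emeasure (M l) (A l))"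
      using d1 by (intro prod.cong refl) (auto simp: B_def)
    also have "(\<Prod>l\<in>J2. emeasure (M l) (B t l)) = (\<Prod>l\<in>J2. emeasure (M l) (A (w, snd l - 1)))"
      using d1 by (intro prod.cong refl) (auto simp: B_def)
    finally show ?thesis unfolding C_def by (simp add: mult_ac)
  qed
  have step5: "(\<integral>\<^sup>+ t. emeasure (PiM K' M) (PiE K' (B t)) \<partial>M (w,0)) = ennreal (r (w,0) / (r (w,0) + S)) * C"
  proof -
    have "(\<integral>\<^sup>+ t. emeasure (PiM K' M) (PiE K' (B t)) \<partial>M (w,0)) = (\<integral>\<^sup>+ t. ennreal (exp (- S * t)) * C \<partial>M (w,0))"
    proof (rule nn_integral_cong_AE)
      show "AE t in M (w,0). emeasure (PiM K' M) (PiE K' (B t)) = ennreal (exp (- S * t)) * C"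
        using AE_Ex_nonneg[of "r (w,0)"] unfolding M_def by eventually_elim (simp add: step4[unfolded M_def])
    qed
    also have "\<dots> = (\<integral>\<^sup>+ t. ennreal (exp (- S * t)) \<partial>M (w,0)) * C"
      by (rule nn_integral_multc) (simp add: M_def)
    also have "(\<integral>\<^sup>+ t. ennreal (exp (- S * t)) \<partial>M (w,0)) = ennreal (r (w,0) / (r (w,0) + S))"
      unfolding M_def by (rule Ex_outer[OF rpos Spos])
    finally show ?thesis .
  qed
  have step6: "r (w,0) + S = (\<Sum>i=1..a. rt \<delta> c (i,0))"
  proof -
    have "(\<Sum>i=1..a. rt \<delta> c (i,0)) = (\<Sum>l\<in>A0. r l)"
      unfolding A0_def r_def by (subst sum.reindex) (auto simp: inj_on_def)
    also have "\<dots> = r (w,0) + S"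
      unfolding S_def A0'_def using w by (subst sum.remove[of A0 "(w,0)"]) (auto simp: A0_def)
    finally show ?thesis by simp
  qed
  have step7: "C = (\<Prod>j\<in>J. emeasure (ExpM (r' j)) (A j))"
  proof -
    have rr: "r' l = r l" if "fst l \<noteq> w" for l using that unfolding r_def r'_def rt_def by simp
    have A0'w: "fst l \<noteq> w" if "l \<in> A0'" for l using that unfolding A0'_def A0_def by auto
    have J1w: "fst l \<noteq> w" if "l \<in> J1" for l using that unfolding J1_def by auto
    have c1: "(\<Prod>l\<in>A0'. emeasure (M l) (G l)) = (\<Prod>l\<in>J \<inter> A0'. emeasure (ExpM (r' l)) (A l))"
    proof -
      have "(\<Prod>l\<in>J \<inter> A0'. emeasure (ExpM (r' l)) (A l)) = (\<Prod>l\<in>{l\<in>A0'. l \<in> J}. emeasure (ExpM (r' l)) (A l))"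
        by (rule prod.cong) auto
      also have "\<dots> = (\<Prod>l\<in>A0'. if l \<in> J then emeasure (ExpM (r' l)) (A l) else 1)"
        by (rule prod.inter_filter[OF finA0'])
      also have "\<dots> = (\<Prod>l\<in>A0'. emeasure (M l) (G l))"
        by (intro prod.cong refl) (auto simp: G_def M_def rr A0'w Ex_space rpos)
      finally show ?thesis by simp
    qed
    have c2: "(\<Prod>l\<in>J1. emeasure (M l) (A l)) = (\<Prod>l\<in>J1. emeasure (ExpM (r' l)) (A l))"
      by (intro prod.cong refl) (simp add: M_def rr J1w)
    have c3: "(\<Prod>l\<in>J2. emeasure (M l) (A (w, snd l - 1))) = (\<Prod>j\<in>Jw. emeasure (ExpM (r' j)) (A j))"
    proof -
      have inj: "inj_on (\<lambda>j. (w, Suc (snd j))) Jw" unfolding Jw_def inj_on_def by auto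
      have "(\<Prod>l\<in>J2. emeasure (M l) (A (w, snd l - 1))) = (\<Prod>j\<in>Jw. emeasure (M (w, Suc (snd j))) (A (w, snd j)))"
        unfolding J2_def by (subst prod.reindex[OF inj]) simp
      also have "\<dots> = (\<Prod>j\<in>Jw. emeasure (ExpM (r' j)) (A j))"
      proof (intro prod.cong refl)
        fix j assume j: "j \<in> Jw"
        then have "j = (w, snd j)" unfolding Jw_def by (cases j) auto
        moreover have "r (w, Suc (snd j)) = r' j" using j unfolding Jw_def r_def r'_def rt_def by auto
        ultimately show "emeasure (M (w, Suc (snd j))) (A (w, snd j)) = emeasure (ExpM (r' j)) (A j)"
          unfolding M_def by simp
      qed
      finally show ?thesis .
    qed
    have Jdec: "J = ((J \<inter> A0') \<union> J1) \<union> Jw"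
      unfolding J1_def Jw_def A0'_def by auto
    have dd: "(J \<inter> A0') \<inter> J1 = {}" "((J \<inter> A0') \<union> J1) \<inter> Jw = {}"
      unfolding J1_def Jw_def A0'_def A0_def by auto
    have "(\<Prod>j\<in>J. emeasure (ExpM (r' j)) (A j)) = (\<Prod>j\<in>(J \<inter> A0') \<union> J1. emeasure (ExpM (r' j)) (A j)) * (\<Prod>j\<in>Jw. emeasure (ExpM (r' j)) (A j))"
      by (subst Jdec, rule prod.union_disjoint) (use J(1) finJ1 finJw dd in auto)
    also have "(\<Prod>j\<in>(J \<inter> A0') \<union> J1. emeasure (ExpM (r' j)) (A j)) = (\<Prod>j\<in>J \<inter> A0'. emeasure (ExpM (r' j)) (A j)) * (\<Prod>j\<in>J1. emeasure (ExpM (r' j)) (A j))"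
      by (rule prod.union_disjoint) (use J(1) finJ1 dd in auto)
    finally show ?thesis unfolding C_def c1 c2 c3 by simp
  qed
  have "emeasure (PS \<delta> c) {F \<in> space (PS \<delta> c). win a F w \<and> (\<forall>j\<in>J. sh a w F j \<in> A j)}
      = ennreal (r (w,0) / (r (w,0) + S)) * C"
    unfolding step1 step2 step3 step5 ..
  also have "\<dots> = ennreal (rt \<delta> c (w,0) / (\<Sum>i=1..a. rt \<delta> c (i,0))) * (\<Prod>j\<in>J. emeasure (ExpM (r' j)) (A j))"
    unfolding step6 step7 by (simp add: r_def)
  finally show ?thesis unfolding r'_def .
qed





lemma sh_space: "sh a w F \<in> space (PiM II (\<lambda>_. borel :: real measure))"
  unfolding sh_def by (simp add: space_PiM)

lemma core:
  fixes \<delta> :: real and c :: "nat \<Rightarrow> nat"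
  assumes \<delta>: "\<delta> > -1" and a: "a \<ge> 1" and w: "w \<in> {1..a}"
    and B: "B \<in> sets (PiM II (\<lambda>_. borel :: real measure))"
  shows "emeasure (PS \<delta> c) ({F \<in> space (PS \<delta> c). win a F w} \<inter> (sh a w -` B))
    = ennreal (rt \<delta> c (w,0) / (\<Sum>i=1..a. rt \<delta> c (i,0))) * emeasure (PS \<delta> (c(w := Suc (c w)))) B"
proof -
  define c' where "c' = c(w := Suc (c w))"
  define p where "p = rt \<delta> c (w,0) / (\<Sum>i=1..a. rt \<delta> c (i,0))"
  define W where "W = {F \<in> space (PS \<delta> c). win a F w}"
  have WS: "W \<in> sets (PS \<delta> c)" unfolding W_def sets_PS space_PS by (rule meas_win)
  have shm: "sh a w \<in> measurable (PS \<delta> c) (PS \<delta> c')"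
    using meas_sh[of w a] w by (simp add: measurable_cong_sets[OF sets_PS sets_PS])
  have shm': "sh a w \<in> measurable (density (PS \<delta> c) (indicator W)) (PS \<delta> c')"
    using shm by (simp add: measurable_cong_sets[OF sets_density refl])
  define D where "D = distr (density (PS \<delta> c) (indicator W)) (PS \<delta> c') (sh a w)"
  define Q where "Q = density (PS \<delta> c') (\<lambda>_. ennreal p)"
  interpret P': product_prob_space "\<lambda>p. ExpM (rt \<delta> c' p)" II by (rule PPS[OF \<delta>])
  interpret PSc: prob_space "PS \<delta> c" by (rule prob_PS[OF \<delta>])
  have eDQ: "D = Q"
  proof (rule measure_eqI_PiM_infinite[where I=II and M="\<lambda>p. ExpM (rt \<delta> c' p)"])
    show "sets D = sets (PiM II (\<lambda>p. ExpM (rt \<delta> c' p)))" by (simp add: D_def PS_def)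
    show "sets Q = sets (PiM II (\<lambda>p. ExpM (rt \<delta> c' p)))" by (simp add: Q_def PS_def)
    show "finite_measure D"
    proof (rule finite_measureI)
      have "emeasure D (space D) = emeasure D (space (PS \<delta> c'))" by (simp add: D_def)
      also have "\<dots> = emeasure (density (PS \<delta> c) (indicator W)) (sh a w -` space (PS \<delta> c') \<inter> space (PS \<delta> c))"
        unfolding D_def by (subst emeasure_distr[OF shm' sets.top]) simp
      also have "\<dots> = emeasure (PS \<delta> c) (W \<inter> (sh a w -` space (PS \<delta> c') \<inter> space (PS \<delta> c)))"
        by (rule emeasure_restricted[OF WS measurable_sets[OF shm sets.top]])
      also have "\<dots> \<le> 1" by (rule PSc.emeasure_le_1)
      finally show "emeasure D (space D) \<noteq> \<infinity>" by (auto simp: top_unique)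
    qed
    fix A J assume J: "finite J" "J \<subseteq> II" and A: "\<And>i. i \<in> J \<Longrightarrow> A i \<in> sets (ExpM (rt \<delta> c' i))"
    let ?E = "prod_emb II (\<lambda>p. ExpM (rt \<delta> c' p)) J (Pi\<^sub>E J A)"
    have ES: "?E \<in> sets (PS \<delta> c')" unfolding PS_def using J A by (intro sets_PiM_I) auto
    have "emeasure D ?E = emeasure (density (PS \<delta> c) (indicator W)) (sh a w -` ?E \<inter> space (PS \<delta> c))"
      unfolding D_def by (subst emeasure_distr[OF shm' ES]) simp
    also have "\<dots> = emeasure (PS \<delta> c) (W \<inter> (sh a w -` ?E \<inter> space (PS \<delta> c)))"
      by (rule emeasure_restricted[OF WS]) (rule measurable_sets[OF shm ES])
    also have "W \<inter> (sh a w -` ?E \<inter> space (PS \<delta> c)) = {F \<in> space (PS \<delta> c). win a F w \<and> (\<forall>j\<in>J. sh a w F j \<in> A j)}"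
    proof -
      have "sh a w F \<in> ?E \<longleftrightarrow> (\<forall>j\<in>J. sh a w F j \<in> A j)" for F
        using J(2) sh_space[of a w F] by (auto simp: prod_emb_def space_PiM PiE_iff)
      then show ?thesis unfolding W_def by auto
    qed
    also have "emeasure (PS \<delta> c) \<dots> = ennreal p * (\<Prod>j\<in>J. emeasure (ExpM (rt \<delta> c' j)) (A j))"
      unfolding p_def c'_def by (rule cyl[OF \<delta> a w J]) (use A in simp)
    also have "\<dots> = emeasure Q ?E"
      unfolding Q_def using ES by (simp add: emeasure_density_const PS_def P'.emeasure_PiM_emb[OF J(2) J(1) A])
    finally show "emeasure D ?E = emeasure Q ?E" .
  qed
  have BS: "B \<in> sets (PS \<delta> c')" using B by (simp add: sets_PS)
  have seq: "{F \<in> space (PS \<delta> c). win a F w} \<inter> (sh a w -` B) = W \<inter> (sh a w -` B \<inter> space (PS \<delta> c))"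
    unfolding W_def by auto
  have "emeasure (PS \<delta> c) ({F \<in> space (PS \<delta> c). win a F w} \<inter> (sh a w -` B)) = emeasure D B"
    unfolding D_def seq
    by (subst emeasure_distr[OF shm' BS]) (simp add: emeasure_restricted[OF WS measurable_sets[OF shm BS]])
  also have "\<dots> = emeasure Q B" by (simp add: eDQ)
  also have "\<dots> = ennreal p * emeasure (PS \<delta> c') B" unfolding Q_def by (rule emeasure_density_const[OF BS])
  finally show ?thesis unfolding p_def c'_def .
qed




fun run :: "nat \<Rightarrow> nat \<Rightarrow> (nat \<times> nat \<Rightarrow> real) \<Rightarrow> nat list option" where
  "run a 0 F = Some []"
| "run a (Suc n) F = (if (\<exists>w. win a F w)
      then map_option (Cons (THE w. win a F w)) (run (Suc a) n (sh a (THE w. win a F w) F)) else None)"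

lemma run_Suc_Some_iff: "run a (Suc n) F = Some (w # ws) \<longleftrightarrow> win a F w \<and> run (Suc a) n (sh a w F) = Some ws"
proof (cases "\<exists>w. win a F w")
  case True
  then obtain w' where w': "win a F w'" by auto
  then have the: "(THE w. win a F w) = w'" using win_unique by blast
  show ?thesis
  proof (cases "w' = w")
    case True then show ?thesis using w' the by auto
  next
    case False
    then have "\<not> win a F w" using w' win_unique by blast
    then show ?thesis using w' the False by auto
  qed
next
  case False then show ?thesis by auto
qed

lemma run_Suc_Nil: "run a (Suc n) F \<noteq> Some []"
  by (auto simp: split: if_splits)

abbreviation "SP \<equiv> PiM II (\<lambda>_. borel :: real measure)"

lemma run_meas_Some: "{F \<in> space SP. run a n F = Some ws} \<in> sets SP"
proof (induction n arbitrary: a ws)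
  case 0
  show ?case by (cases "ws = []") auto
next
  case (Suc n)
  show ?case
  proof (cases ws)
    case Nil then show ?thesis using run_Suc_Nil by simp
  next
    case (Cons w ws')
    show ?thesis
    proof (cases "w \<ge> 1")
      case True
      have "{F \<in> space SP. run a (Suc n) F = Some ws} =
          {F \<in> space SP. win a F w} \<inter> (sh a w -` {G \<in> space SP. run (Suc a) n G = Some ws'} \<inter> space SP)"
        using Cons sh_space by (auto simp: run_Suc_Some_iff simp del: run.simps)
      also have "\<dots> \<in> sets SP"
        by (intro sets.Int meas_win measurable_sets[OF meas_sh[OF True]] Suc.IH)
      finally show ?thesis .
    next
      case False
      then have "{F \<in> space SP. run a (Suc n) F = Some ws} = {}"
        using Cons by (auto simp: run_Suc_Some_iff win_def simp del: run.simps)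
      then show ?thesis by (metis sets.empty_sets)
    qed
  qed
qed

lemma run_meas: "run a n \<in> measurable SP (count_space UNIV)"
proof (subst measurable_count_space_eq2_countable, intro conjI ballI)
  show "run a n \<in> space SP \<rightarrow> UNIV" by simp
  fix v :: "nat list option"
  show "run a n -` {v} \<inter> space SP \<in> sets SP"
  proof (cases v)
    case (Some ws)
    have "run a n -` {v} \<inter> space SP = {F \<in> space SP. run a n F = Some ws}" using Some by auto
    then show ?thesis using run_meas_Some by simp
  next
    case None
    have "run a n -` {v} \<inter> space SP = space SP - (\<Union>ws. {F \<in> space SP. run a n F = Some ws})"
      using None by auto
    also have "\<dots> \<in> sets SP" by (intro sets.Diff sets.top sets.countable_UN') (auto intro: run_meas_Some)
    finally show ?thesis .
  qed
qed

lemma pmf_wB_Cons: assumes "\<delta> > -1" "a \<ge> 1"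
  shows "pmf (wB \<delta> a c (Suc n)) (w # ws) = pmf (stp \<delta> a c) w * pmf (wB \<delta> (Suc a) (c(w := Suc (c w))) n) ws"
proof -
  have "ennreal (pmf (wB \<delta> a c (Suc n)) (w # ws)) =
     (\<integral>\<^sup>+ x. ennreal (pmf (map_pmf (Cons x) (wB \<delta> (Suc a) (c(x := Suc (c x))) n)) (w # ws)) \<partial>measure_pmf (stp \<delta> a c))"
    by (simp add: ennreal_pmf_bind map_pmf_def)
  also have "\<dots> = (\<integral>\<^sup>+ x. ennreal (pmf (wB \<delta> (Suc a) (c(w := Suc (c w))) n) ws) * indicator {w} x \<partial>measure_pmf (stp \<delta> a c))"
  proof (intro nn_integral_cong)
    fix x
    show "ennreal (pmf (map_pmf (Cons x) (wB \<delta> (Suc a) (c(x := Suc (c x))) n)) (w # ws)) =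
       ennreal (pmf (wB \<delta> (Suc a) (c(w := Suc (c w))) n) ws) * indicator {w} x"
    proof (cases "x = w")
      case True
      then show ?thesis by (simp add: pmf_map_inj' inj_on_def)
    next
      case False
      have "pmf (map_pmf (Cons x) (wB \<delta> (Suc a) (c(x := Suc (c x))) n)) (w # ws) = 0"
        using False by (auto simp: pmf_eq_0_set_pmf)
      then show ?thesis using False by simp
    qed
  qed
  also have "\<dots> = ennreal (pmf (wB \<delta> (Suc a) (c(w := Suc (c w))) n) ws) * emeasure (measure_pmf (stp \<delta> a c)) {w}"
    by (rule nn_integral_cmult_indicator) simp
  also have "\<dots> = ennreal (pmf (stp \<delta> a c) w * pmf (wB \<delta> (Suc a) (c(w := Suc (c w))) n) ws)"
    by (simp add: emeasure_pmf_single ennreal_mult mult.commute)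
  finally show ?thesis by simp
qed


lemma opt_measure_eq:
  fixes N :: "'b::countable option measure"
  assumes N: "prob_space N" "sets N = UNIV"
    and eq: "\<And>v. emeasure N {Some v} = ennreal (pmf p v)"
  shows "N = measure_pmf (map_pmf Some p)"
proof -
  interpret N: prob_space N by (rule N(1))
  let ?Q = "measure_pmf (map_pmf Some p)"
  have spN: "space N = UNIV" using N(2) by (metis sets.top UNIV_I UNIV_eq_I Pow_UNIV sets.sets_into_space subset_antisym top_greatest)
  have eqS: "emeasure N {Some v} = emeasure ?Q {Some v}" for v
    by (simp add: eq emeasure_pmf_single pmf_map_inj')
  have QN: "emeasure ?Q {None} = 0"
    by (simp add: emeasure_pmf_single pmf_eq_0_set_pmf)
  have "emeasure N (range Some) = (\<integral>\<^sup>+x. emeasure N {x} \<partial>count_space (range Some))"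
    by (rule emeasure_countable_singleton) (auto simp: N(2))
  also have "\<dots> = (\<integral>\<^sup>+x. emeasure ?Q {x} \<partial>count_space (range Some))"
    by (intro nn_integral_cong) (auto simp: eqS)
  also have "\<dots> = emeasure ?Q (range Some)"
    by (rule emeasure_countable_singleton[symmetric]) auto
  also have "range (Some :: 'b \<Rightarrow> 'b option) = UNIV - {None}"
  proof (rule set_eqI)
    fix x :: "'b option" show "x \<in> range Some \<longleftrightarrow> x \<in> UNIV - {None}" by (cases x) auto
  qed
  also have "emeasure ?Q (UNIV - {None}) = emeasure ?Q UNIV - emeasure ?Q {None}"
    using emeasure_compl[of "{None}" ?Q] by (simp add: measure_pmf.emeasure_finite)
  also have "\<dots> = 1" using QN measure_pmf.emeasure_space_1[of "map_pmf Some p"] by simp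
  finally have NS: "emeasure N (UNIV - {None}) = 1" .
  have "emeasure N {None} = emeasure N (space N - (UNIV - {None}))" using spN by (simp add: Diff_Diff_Int)
  also have "\<dots> = emeasure N (space N) - emeasure N (UNIV - {None})"
    by (rule emeasure_compl) (auto simp: N(2) N.emeasure_finite)
  also have "\<dots> = 0" using NS N.emeasure_space_1 by simp
  finally have NN: "emeasure N {None} = 0" .
  show ?thesis
  proof (rule measure_eqI_countable[of _ UNIV])
    show "sets N = Pow UNIV" using N(2) by simp
    show "sets ?Q = Pow UNIV" by simp
    show "countable (UNIV :: 'b option set)" by simp
    fix x :: "'b option"
    show "emeasure N {x} = emeasure ?Q {x}"
    proof (cases x)
      case None then show ?thesis using NN QN by simp
    next
      case (Some v) then show ?thesis using eqS by simp
    qed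
  qed
qed

lemma run_prob:
  assumes \<delta>: "\<delta> > -1"
  shows "a \<ge> 1 \<Longrightarrow> emeasure (PS \<delta> c) {F \<in> space (PS \<delta> c). run a n F = Some v} = ennreal (pmf (wB \<delta> a c n) v)"
proof (induction n arbitrary: a c v)
  case 0
  interpret prob_space "PS \<delta> c" by (rule prob_PS[OF \<delta>])
  show ?case by (cases "v = []") (auto simp: emeasure_space_1 indicator_def)
next
  case (Suc n)
  show ?case
  proof (cases v)
    case Nil
    have "pmf (wB \<delta> a c (Suc n)) [] = 0"
      using set_wB'(1)[OF \<delta> Suc.prems, of "[]" c "Suc n"] by (auto simp: pmf_eq_0_set_pmf)
    then show ?thesis using Nil run_Suc_Nil by (simp del: run.simps)
  next
    case (Cons w ws)
    define Bs where "Bs = {G \<in> space SP. run (Suc a) n G = Some ws}"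
    have BsS: "Bs \<in> sets SP" unfolding Bs_def by (rule run_meas_Some)
    have seteq: "{F \<in> space (PS \<delta> c). run a (Suc n) F = Some v} = {F \<in> space (PS \<delta> c). win a F w} \<inter> (sh a w -` Bs)"
      unfolding Bs_def Cons using sh_space by (auto simp: run_Suc_Some_iff simp del: run.simps)
    show ?thesis
    proof (cases "w \<in> {1..a}")
      case True
      have "emeasure (PS \<delta> c) {F \<in> space (PS \<delta> c). run a (Suc n) F = Some v}
          = ennreal (rt \<delta> c (w,0) / (\<Sum>i=1..a. rt \<delta> c (i,0))) * emeasure (PS \<delta> (c(w := Suc (c w)))) Bs"
        unfolding seteq by (rule core[OF \<delta> Suc.prems True BsS])
      also have "Bs = {G \<in> space (PS \<delta> (c(w := Suc (c w)))). run (Suc a) n G = Some ws}"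
        unfolding Bs_def space_PS ..
      also have "emeasure (PS \<delta> (c(w := Suc (c w)))) \<dots> = ennreal (pmf (wB \<delta> (Suc a) (c(w := Suc (c w))) n) ws)"
        using Suc.IH[of "Suc a"] by simp
      also have "rt \<delta> c (w,0) / (\<Sum>i=1..a. rt \<delta> c (i,0)) = pmf (stp \<delta> a c) w"
        using True by (simp add: pmf_stp[OF \<delta> Suc.prems] rt_def)
      finally have X: "emeasure (PS \<delta> c) {F \<in> space (PS \<delta> c). run a (Suc n) F = Some v}
          = ennreal (pmf (stp \<delta> a c) w) * ennreal (pmf (wB \<delta> (Suc a) (c(w := Suc (c w))) n) ws)" .
      show ?thesis
        using X by (simp only: Cons pmf_wB_Cons[OF \<delta> Suc.prems] ennreal_mult[OF pmf_nonneg pmf_nonneg])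
    next
      case False
      then have "{F \<in> space (PS \<delta> c). run a (Suc n) F = Some v} = {}"
        unfolding seteq by (auto simp: win_def)
      moreover have "pmf (stp \<delta> a c) w = 0" unfolding pmf_stp[OF \<delta> Suc.prems] using False by (simp only: if_False)
      ultimately show ?thesis
        by (simp only: Cons pmf_wB_Cons[OF \<delta> Suc.prems] emeasure_empty mult_zero_left ennreal_0)
    qed
  qed
qed

lemma run_distr:
  assumes \<delta>: "\<delta> > -1" and a: "a \<ge> 1"
  shows "distr (PS \<delta> c) (count_space UNIV) (run a n) = measure_pmf (map_pmf Some (wB \<delta> a c n))"
proof (rule opt_measure_eq)
  have rm: "run a n \<in> measurable (PS \<delta> c) (count_space UNIV)"
    using run_meas by (simp add: measurable_cong_sets[OF sets_PS refl])
  show "prob_space (distr (PS \<delta> c) (count_space UNIV) (run a n))"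
    by (rule prob_space.prob_space_distr[OF prob_PS[OF \<delta>] rm])
  show "sets (distr (PS \<delta> c) (count_space UNIV) (run a n)) = UNIV" by simp
  fix v
  have "emeasure (distr (PS \<delta> c) (count_space UNIV) (run a n)) {Some v} = emeasure (PS \<delta> c) (run a n -` {Some v} \<inter> space (PS \<delta> c))"
    by (rule emeasure_distr[OF rm]) simp
  also have "run a n -` {Some v} \<inter> space (PS \<delta> c) = {F \<in> space (PS \<delta> c). run a n F = Some v}" by auto
  also have "emeasure (PS \<delta> c) \<dots> = ennreal (pmf (wB \<delta> a c n) v)" by (rule run_prob[OF \<delta> a])
  finally show "emeasure (distr (PS \<delta> c) (count_space UNIV) (run a n)) {Some v} = ennreal (pmf (wB \<delta> a c n) v)" .
qed




definition nxt :: "(nat \<Rightarrow> nat \<Rightarrow> real) \<Rightarrow> real list \<Rightarrow> real" where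
  "nxt E ts = Inf {ts ! (i - 1) + jump E i k | i k. 1 \<le> k \<and> 1 \<le> i \<and> i \<le> length ts \<and> ts ! (i - 1) + jump E i k > last ts}"

primrec Tl :: "real list \<Rightarrow> (nat \<Rightarrow> nat \<Rightarrow> real) \<Rightarrow> nat \<Rightarrow> real list" where
  "Tl ts0 E 0 = ts0"
| "Tl ts0 E (Suc m) = Tl ts0 E m @ [nxt E (Tl ts0 E m)]"

lemma TAlist_Tl: "TAlist E m = Tl [0] E m"
  by (induction m) (simp_all add: Let_def nxt_def)

lemma TBlist_Tl: "TBlist E m = Tl [0, 0] E m"
  by (induction m) (simp_all add: Let_def nxt_def)

lemma Tl_Suc_front: "Tl ts E (Suc m) = Tl (ts @ [nxt E ts]) E m"
  by (induction m) simp_all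

lemma Tl_length: "length (Tl ts E m) = length ts + m"
  by (induction m) simp_all

lemma Tl_prefix: "j \<le> m \<Longrightarrow> \<exists>zs. Tl ts E m = Tl ts E j @ zs"
proof (induction m)
  case 0 then show ?case by simp
next
  case (Suc m)
  show ?case
  proof (cases "j = Suc m")
    case True then show ?thesis by simp
  next
    case False
    then obtain zs where "Tl ts E m = Tl ts E j @ zs" using Suc by auto
    then show ?thesis by simp
  qed
qed

lemma Tl_nth: "j \<le> m \<Longrightarrow> p < length (Tl ts E j) \<Longrightarrow> Tl ts E j ! p = Tl ts E m ! p"
  using Tl_prefix[of j m ts E] by (auto simp: nth_append)

lemma jump_0[simp]: "jump E i 0 = 0" by (simp add: jump_def)
lemma jump_Suc: "jump E i (Suc k) = jump E i k + E i k" by (simp add: jump_def)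

lemma jump_strict: assumes pos: "\<And>k. E i k > 0" and "k < k'" shows "jump E i k < jump E i k'"
  using assms(2)
proof (induction k')
  case 0 then show ?case by simp
next
  case (Suc k')
  have "jump E i k' < jump E i (Suc k')" using pos[of k'] by (simp add: jump_Suc)
  then show ?case using Suc by (cases "k = k'") auto
qed

lemma jump_mono: assumes pos: "\<And>k. E i k > 0" and "k \<le> k'" shows "jump E i k \<le> jump E i k'"
proof (cases "k = k'")
  case False then show ?thesis using jump_strict[of E i k k'] pos assms(2) by auto
qed simp

definition Inv :: "(nat \<Rightarrow> nat \<Rightarrow> real) \<Rightarrow> nat \<Rightarrow> real list \<Rightarrow> (nat \<Rightarrow> nat) \<Rightarrow> (nat \<times> nat \<Rightarrow> real) \<Rightarrow> bool" where
  "Inv E a ts c F \<longleftrightarrow> length ts = a \<and> a \<ge> 1 \<and>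
    (\<forall>i\<in>{1..a}. ts ! (i - 1) \<le> last ts \<and> jump E i (c i) \<le> last ts - ts ! (i - 1)
       \<and> F (i, 0) = ts ! (i - 1) + jump E i (Suc (c i)) - last ts \<and> F (i, 0) > 0
       \<and> (\<forall>k\<ge>1. F (i, k) = E i (c i + k))) \<and>
    (\<forall>i>a. c i = 0 \<and> (\<forall>k. F (i, k) = E i k))"

lemma nxt_eq:
  assumes pos: "\<And>i k. i \<ge> 1 \<Longrightarrow> E i k > 0" and inv: "Inv E a ts c F" and w: "win a F w"
  shows "nxt E ts = last ts + F (w, 0)"
proof -
  let ?S = "{ts ! (i - 1) + jump E i k | i k. 1 \<le> k \<and> 1 \<le> i \<and> i \<le> length ts \<and> ts ! (i - 1) + jump E i k > last ts}"
  have wa: "w \<in> {1..a}" using w by (simp add: win_def)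
  from inv have len: "length ts = a" and I: "\<And>i. i \<in> {1..a} \<Longrightarrow> ts ! (i - 1) \<le> last ts \<and> jump E i (c i) \<le> last ts - ts ! (i - 1)
       \<and> F (i, 0) = ts ! (i - 1) + jump E i (Suc (c i)) - last ts \<and> F (i, 0) > 0"
    unfolding Inv_def by blast+
  have mem: "last ts + F (w, 0) \<in> ?S"
  proof -
    have "last ts + F (w, 0) = ts ! (w - 1) + jump E w (Suc (c w))" using I[OF wa] by simp
    moreover have "ts ! (w - 1) + jump E w (Suc (c w)) > last ts" using I[OF wa] by simp
    ultimately show ?thesis unfolding mem_Collect_eq
      by (intro exI[of _ w] exI[of _ "Suc (c w)"]) (use wa len in auto)
  qed
  have low: "last ts + F (w, 0) \<le> y" if "y \<in> ?S" for y
  proof -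
    from that obtain i k where y: "y = ts ! (i - 1) + jump E i k" and k: "1 \<le> k" and i: "1 \<le> i" "i \<le> length ts"
      and gt: "ts ! (i - 1) + jump E i k > last ts" by blast
    have ia: "i \<in> {1..a}" using i len by auto
    have posi: "\<And>k. E i k > 0" using pos i by auto
    have "jump E i k > jump E i (c i)" using gt I[OF ia] by linarith
    then have "k > c i" using jump_mono[where E=E and i=i, OF posi, of k "c i"] by (cases "k \<le> c i") auto
    then have "jump E i (Suc (c i)) \<le> jump E i k" by (intro jump_mono[where E=E and i=i, OF posi]) simp
    then have "y \<ge> last ts + F (i, 0)" using y I[OF ia] by simp
    moreover have "F (w, 0) \<le> F (i, 0)" using w ia unfolding win_def by (cases "i = w") (auto simp: less_imp_le)
    ultimately show ?thesis by simp
  qed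
  show ?thesis unfolding nxt_def by (rule cInf_eq_minimum[OF mem low])
qed

lemma sh_at: "fst p \<ge> 1 \<Longrightarrow> sh a w F p = (if fst p = w then F (w, Suc (snd p))
                      else if fst p \<le> a \<and> snd p = 0 then F p - F (w, 0) else F p)"
  by (simp add: sh_def II_def)

lemma Inv_step:
  assumes pos: "\<And>i k. i \<ge> 1 \<Longrightarrow> E i k > 0" and inv: "Inv E a ts c F" and w: "win a F w"
  shows "Inv E (Suc a) (ts @ [nxt E ts]) (c(w := Suc (c w))) (sh a w F)"
proof -
  have wa: "w \<in> {1..a}" using w by (simp add: win_def)
  from inv have len: "length ts = a" and a1: "a \<ge> 1" and I: "\<And>i. i \<in> {1..a} \<Longrightarrow> ts ! (i - 1) \<le> last ts \<and> jump E i (c i) \<le> last ts - ts ! (i - 1)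
       \<and> F (i, 0) = ts ! (i - 1) + jump E i (Suc (c i)) - last ts \<and> F (i, 0) > 0 \<and> (\<forall>k\<ge>1. F (i, k) = E i (c i + k))"
    and O: "\<And>i. i > a \<Longrightarrow> c i = 0 \<and> (\<forall>k. F (i, k) = E i k)"
    unfolding Inv_def by blast+
  define L' where "L' = last ts + F (w, 0)"
  have nx: "nxt E ts = L'" unfolding L'_def by (rule nxt_eq[OF pos inv w])
  define ts' where "ts' = ts @ [L']"
  define c' where "c' = c(w := Suc (c w))"
  have lt: "last ts' = L'" unfolding ts'_def by simp
  have nth': "ts' ! (i - 1) = (if i = Suc a then L' else ts ! (i - 1))" if "i \<in> {1..Suc a}" for i
    using that len unfolding ts'_def by (auto simp: nth_append)
  have Fw: "F (w, 0) > 0" using I[OF wa] by simp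
  have Lw: "L' = ts ! (w - 1) + jump E w (Suc (c w))" using I[OF wa] unfolding L'_def by simp
  have winlt: "F (w, 0) < F (i, 0)" if "i \<in> {1..a}" "i \<noteq> w" for i using w that unfolding win_def by auto
  have part1: "ts' ! (i - 1) \<le> last ts' \<and> jump E i (c' i) \<le> last ts' - ts' ! (i - 1)
       \<and> sh a w F (i, 0) = ts' ! (i - 1) + jump E i (Suc (c' i)) - last ts' \<and> sh a w F (i, 0) > 0
       \<and> (\<forall>k\<ge>1. sh a w F (i, k) = E i (c' i + k))" if i: "i \<in> {1..Suc a}" for i
  proof (cases "i = Suc a")
    case True
    have "i \<noteq> w" using True wa by auto
    then show ?thesis using True O[of "Suc a"] pos[of "Suc a"] i unfolding lt nth'[OF i] c'_def
      by (auto simp: sh_at jump_Suc)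
  next
    case False
    then have ia: "i \<in> {1..a}" using i by auto
    show ?thesis
    proof (cases "i = w")
      case True
      have posw: "E w (c w) > 0" "\<And>k. E w k > 0" using pos wa by auto
      show ?thesis using True False I[OF ia] Fw Lw posw wa unfolding lt nth'[OF i] c'_def
        by (auto simp: sh_at jump_Suc L'_def algebra_simps)
    next
      case nw: False
      have "jump E i (c i) \<le> last ts - ts ! (i - 1)" using I[OF ia] by simp
      then show ?thesis using nw False I[OF ia] Fw winlt[OF ia nw] ia unfolding lt nth'[OF i] c'_def L'_def
        by (auto simp: sh_at)
    qed
  qed
  have part2: "c' i = 0 \<and> (\<forall>k. sh a w F (i, k) = E i k)" if "i > Suc a" for i
    using that O[of i] wa unfolding c'_def by (auto simp: sh_at)
  have "Inv E (Suc a) ts' c' (sh a w F)"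
    unfolding Inv_def
  proof (intro conjI)
    show "length ts' = Suc a" using len by (simp add: ts'_def)
    show "1 \<le> Suc a" by simp
    show "\<forall>i\<in>{1..Suc a}. ts' ! (i - 1) \<le> last ts' \<and> jump E i (c' i) \<le> last ts' - ts' ! (i - 1) \<and>
        sh a w F (i, 0) = ts' ! (i - 1) + jump E i (Suc (c' i)) - last ts' \<and>
        0 < sh a w F (i, 0) \<and> (\<forall>k\<ge>1. sh a w F (i, k) = E i (c' i + k))"
      using part1 by blast
    show "\<forall>i>Suc a. c' i = 0 \<and> (\<forall>k. sh a w F (i, k) = E i k)" using part2 by blast
  qed
  then show ?thesis unfolding nx ts'_def c'_def .
qed

lemma Inv_run:
  assumes pos: "\<And>i k. i \<ge> 1 \<Longrightarrow> E i k > 0"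
  shows "Inv E a ts c F \<Longrightarrow> run a m F = Some ws \<Longrightarrow> \<exists>F'. Inv E (a + m) (Tl ts E m) (addc c ws) F'"
proof (induction m arbitrary: a ts c F ws)
  case 0 then show ?case by auto
next
  case (Suc m)
  obtain w ws' where ws: "ws = w # ws'"
    using Suc.prems(2) run_Suc_Nil by (cases ws) auto
  have w: "win a F w" and r: "run (Suc a) m (sh a w F) = Some ws'"
    using Suc.prems(2) unfolding ws run_Suc_Some_iff by auto
  have "Inv E (Suc a) (ts @ [nxt E ts]) (c(w := Suc (c w))) (sh a w F)"
    by (rule Inv_step[OF pos Suc.prems(1) w])
  from Suc.IH[OF this r] show ?case
    unfolding ws Tl_Suc_front addc_Cons by (simp only: add_Suc_shift)
qed

lemma Inv_card:
  assumes pos: "\<And>i k. i \<ge> 1 \<Longrightarrow> E i k > 0" and inv: "Inv E a ts c F" and i: "i \<in> {1..a}"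
  shows "card {k. 1 \<le> k \<and> jump E i k \<le> last ts - ts ! (i - 1)} = c i"
proof -
  have posi: "\<And>k. E i k > 0" using pos i by auto
  from inv i have h1: "jump E i (c i) \<le> last ts - ts ! (i - 1)"
    and h2: "ts ! (i - 1) + jump E i (Suc (c i)) - last ts > 0"
    unfolding Inv_def by (blast, metis)
  have "{k. 1 \<le> k \<and> jump E i k \<le> last ts - ts ! (i - 1)} = {1..c i}"
  proof (intro set_eqI iffI)
    fix k assume "k \<in> {k. 1 \<le> k \<and> jump E i k \<le> last ts - ts ! (i - 1)}"
    then have k: "1 \<le> k" "jump E i k \<le> last ts - ts ! (i - 1)" by auto
    have "k \<le> c i"
    proof (rule ccontr)
      assume "\<not> k \<le> c i"
      then have "jump E i (Suc (c i)) \<le> jump E i k" by (intro jump_mono[where E=E and i=i, OF posi]) simp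
      then show False using k h2 by simp
    qed
    then show "k \<in> {1..c i}" using k by simp
  next
    fix k assume "k \<in> {1..c i}"
    then show "k \<in> {k. 1 \<le> k \<and> jump E i k \<le> last ts - ts ! (i - 1)}"
      using jump_mono[where E=E and i=i, OF posi, of k "c i"] h1 by auto
  qed
  then show ?thesis by simp
qed




definition F0 :: "(nat \<Rightarrow> nat \<Rightarrow> real) \<Rightarrow> nat \<times> nat \<Rightarrow> real" where
  "F0 E = (\<lambda>p\<in>II. E (fst p) (snd p))"

lemma F0_at: "i \<ge> 1 \<Longrightarrow> F0 E (i, k) = E i k" by (simp add: F0_def II_def)

lemma jump_1: "jump E i (Suc 0) = E i 0" by (simp add: jump_def)

lemma Inv_initA: assumes pos: "\<And>i k. i \<ge> 1 \<Longrightarrow> E i k > 0"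
  shows "Inv E 1 [0] (\<lambda>_. 0) (F0 E)"
  unfolding Inv_def using pos by (auto simp: F0_at jump_1)

lemma Inv_initB: assumes pos: "\<And>i k. i \<ge> 1 \<Longrightarrow> E i k > 0"
  shows "Inv E 2 [0, 0] (\<lambda>_. 0) (F0 E)"
proof -
  have z: "[0, 0::real] ! (i - 1) = 0" if "i \<in> {1..2}" for i :: nat
  proof -
    have "i = 1 \<or> i = 2" using that by auto
    then show ?thesis by auto
  qed
  show ?thesis unfolding Inv_def using pos z by (auto simp: F0_at jump_1)
qed

lemma BI_Inv: assumes pos: "\<And>i k. i \<ge> 1 \<Longrightarrow> E i k > 0" and inv: "Inv E a ts c F" and i: "i \<in> {1..a}"
  shows "BI E i (last ts - ts ! (i - 1)) = BI0 i + c i"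
  unfolding BI_def using Inv_card[OF pos inv i] by simp

lemma pathA:
  assumes pos: "\<And>i k. i \<ge> 1 \<Longrightarrow> E i k > 0" and n: "n \<ge> 1" and r: "run 1 (n - 1) (F0 E) = Some ws"
  shows "DtildeA E n = dvec n ws"
proof -
  obtain F' where inv: "Inv E (1 + (n - 1)) (Tl [0] E (n - 1)) (addc (\<lambda>_. 0) ws) F'"
    using Inv_run[OF pos Inv_initA[OF pos] r] by blast
  define ts where "ts = Tl [0] E (n - 1)"
  have len: "length ts = n" unfolding ts_def using n by (simp add: Tl_length)
  have an: "1 + (n - 1) = n" using n by simp
  have ne: "ts \<noteq> []" using len n by auto
  have TAn: "TA E n = last ts" unfolding TA_def TAlist_Tl ts_def[symmetric] using len ne
    by (simp add: last_conv_nth)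
  have TAi: "TA E i = ts ! (i - 1)" if "i \<in> {1..n}" for i
  proof -
    have "TA E i = Tl [0] E (i - 1) ! (i - 1)" unfolding TA_def TAlist_Tl ..
    also have "\<dots> = ts ! (i - 1)" unfolding ts_def using that by (intro Tl_nth) (auto simp: Tl_length)
    finally show ?thesis .
  qed
  show ?thesis unfolding DtildeA_def dvec_def
  proof (intro map_cong refl)
    fix i assume "i \<in> set [1..<n+1]"
    then have i: "i \<in> {1..n}" by auto
    have "BI E i (TA E n - TA E i) = BI E i (last ts - ts ! (i - 1))" using TAn TAi[OF i] by simp
    also have "\<dots> = BI0 i + addc (\<lambda>_. 0) ws i"
      by (rule BI_Inv[OF pos inv[unfolded an ts_def[symmetric]] i])
    finally show "BI E i (TA E n - TA E i) = BI0 i + count_list ws i" by (simp add: addc_def)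
  qed
qed

lemma pathB:
  assumes pos: "\<And>i k. i \<ge> 1 \<Longrightarrow> E i k > 0" and n: "n \<ge> 1" and r: "run 2 (n - 1) (F0 E) = Some ws"
  shows "DtildeB E n = dvec n ws"
proof -
  obtain F' where inv: "Inv E (2 + (n - 1)) (Tl [0, 0] E (n - 1)) (addc (\<lambda>_. 0) ws) F'"
    using Inv_run[OF pos Inv_initB[OF pos] r] by blast
  define ts where "ts = Tl [0, 0] E (n - 1)"
  have len: "length ts = n + 1" unfolding ts_def using n by (simp add: Tl_length)
  have an: "2 + (n - 1) = n + 1" using n by simp
  have ne: "ts \<noteq> []" using len n by auto
  have TBn: "TB E n = last ts" unfolding TB_def TBlist_Tl ts_def[symmetric] using len ne
    by (simp add: last_conv_nth)
  have TBi: "TB E (i - 1) = ts ! (i - 1)" if "i \<in> {1..n}" for i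
  proof -
    have "TB E (i - 1) = Tl [0, 0] E (i - 1 - 1) ! (i - 1)" unfolding TB_def TBlist_Tl ..
    also have "\<dots> = ts ! (i - 1)" unfolding ts_def using that by (intro Tl_nth) (auto simp: Tl_length)
    finally show ?thesis .
  qed
  show ?thesis unfolding DtildeB_def dvec_def
  proof (intro map_cong refl)
    fix i assume "i \<in> set [1..<n+1]"
    then have i: "i \<in> {1..n}" by auto
    then have i': "i \<in> {1..n+1}" by auto
    have "BI E i (TB E n - TB E (i - 1)) = BI E i (last ts - ts ! (i - 1))" using TBn TBi[OF i] by simp
    also have "\<dots> = BI0 i + addc (\<lambda>_. 0) ws i"
      by (rule BI_Inv[OF pos inv[unfolded an ts_def[symmetric]] i'])
    finally show "BI E i (TB E n - TB E (i - 1)) = BI0 i + count_list ws i" by (simp add: addc_def)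
  qed
qed




lemma INF_filter_top:
  fixes g :: "'j \<Rightarrow> ereal"
  shows "(INF j\<in>J. if P j then g j else \<infinity>) = (INF j\<in>{j\<in>J. P j}. g j)"
proof (rule antisym)
  show "(INF j\<in>J. if P j then g j else \<infinity>) \<le> (INF j\<in>{j\<in>J. P j}. g j)"
  proof (rule INF_greatest)
    fix j assume "j \<in> {j\<in>J. P j}"
    then have "(INF j\<in>J. if P j then g j else \<infinity>) \<le> (if P j then g j else \<infinity>)" by (intro INF_lower) auto
    then show "(INF j\<in>J. if P j then g j else \<infinity>) \<le> g j" using \<open>j \<in> {j\<in>J. P j}\<close> by simp
  qed
  show "(INF j\<in>{j\<in>J. P j}. g j) \<le> (INF j\<in>J. if P j then g j else \<infinity>)"
  proof (rule INF_greatest)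
    fix j assume j: "j \<in> J"
    show "(INF j\<in>{j\<in>J. P j}. g j) \<le> (if P j then g j else \<infinity>)"
      using j by (cases "P j") (auto intro: INF_lower)
  qed
qed

lemma inf_meas:
  fixes J :: "'j::countable set" and v :: "'j \<Rightarrow> 'a \<Rightarrow> real"
  assumes v: "\<And>j. j \<in> J \<Longrightarrow> v j \<in> borel_measurable N" and l: "l \<in> borel_measurable N"
  shows "(\<lambda>\<omega>. Inf {v j \<omega> | j. j \<in> J \<and> v j \<omega> > l \<omega>}) \<in> borel_measurable N"
proof -
  define g where "g = (\<lambda>\<omega>. if \<exists>j\<in>J. v j \<omega> > l \<omega> then real_of_ereal (INF j\<in>J. if v j \<omega> > l \<omega> then ereal (v j \<omega>) else \<infinity>) else Inf {})"
  have eq: "Inf {v j \<omega> | j. j \<in> J \<and> v j \<omega> > l \<omega>} = g \<omega>" for \<omega>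
  proof (cases "\<exists>j\<in>J. v j \<omega> > l \<omega>")
    case True
    let ?S = "{v j \<omega> | j. j \<in> J \<and> v j \<omega> > l \<omega>}"
    have Sim: "?S = (\<lambda>j. v j \<omega>) ` {j\<in>J. v j \<omega> > l \<omega>}" by auto
    have ne: "?S \<noteq> {}" using True by auto
    have bdd: "bdd_below ?S" by (rule bdd_belowI[of _ "l \<omega>"]) auto
    have "ereal (Inf ?S) = Inf (ereal ` ?S)" by (rule ereal_Inf'[OF bdd ne])
    also have "\<dots> = (INF j\<in>{j\<in>J. v j \<omega> > l \<omega>}. ereal (v j \<omega>))" unfolding Sim image_image ..
    also have "\<dots> = (INF j\<in>J. if v j \<omega> > l \<omega> then ereal (v j \<omega>) else \<infinity>)"
      by (rule INF_filter_top[symmetric])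
    finally have h: "(INF j\<in>J. if v j \<omega> > l \<omega> then ereal (v j \<omega>) else \<infinity>) = ereal (Inf ?S)" by simp
    have "Inf ?S = real_of_ereal (INF j\<in>J. if v j \<omega> > l \<omega> then ereal (v j \<omega>) else \<infinity>)"
      unfolding h by simp
    then show ?thesis using True unfolding g_def by simp
  next
    case False
    then have e: "{v j \<omega> | j. j \<in> J \<and> v j \<omega> > l \<omega>} = {}" by auto
    show ?thesis unfolding g_def e using False by simp
  qed
  have pr: "Measurable.pred N (\<lambda>\<omega>. \<exists>j\<in>J. v j \<omega> > l \<omega>)"
  proof (rule pred_intros_countable_bounded(4))
    fix j assume j: "j \<in> J"
    have [measurable]: "v j \<in> borel_measurable N" by (rule v[OF j])
    have [measurable]: "l \<in> borel_measurable N" by (rule l)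
    show "Measurable.pred N (\<lambda>\<omega>. v j \<omega> > l \<omega>)" by measurable
  qed
  have im: "(\<lambda>\<omega>. INF j\<in>J. if v j \<omega> > l \<omega> then ereal (v j \<omega>) else \<infinity>) \<in> borel_measurable N"
  proof (rule borel_measurable_INF)
    show "countable J" by simp
    fix j assume j: "j \<in> J"
    have [measurable]: "v j \<in> borel_measurable N" by (rule v[OF j])
    have [measurable]: "l \<in> borel_measurable N" by (rule l)
    show "(\<lambda>\<omega>. if v j \<omega> > l \<omega> then ereal (v j \<omega>) else \<infinity>) \<in> borel_measurable N" by measurable
  qed
  have "g \<in> borel_measurable N"
    unfolding g_def by (rule measurable_If[OF borel_measurable_real_of_ereal[OF im] measurable_const pr[unfolded pred_def]]) simp
  then show ?thesis unfolding eq[abs_def] .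
qed

lemma card_meas:
  assumes P: "\<And>k. Measurable.pred N (P k)"
  shows "(\<lambda>\<omega>. card {k::nat. P k \<omega>}) \<in> measurable N (count_space UNIV)"
proof (subst measurable_count_space_eq2_countable, intro conjI ballI)
  show "(\<lambda>\<omega>. card {k. P k \<omega>}) \<in> space N \<rightarrow> UNIV" by simp
  fix m :: nat
  have [measurable]: "\<And>k. Measurable.pred N (P k)" by (rule P)
  have eq: "(\<lambda>\<omega>. card {k. P k \<omega>}) -` {m} \<inter> space N =
     (\<Union>K\<in>{K. finite K \<and> card K = m}. {\<omega>\<in>space N. \<forall>k. P k \<omega> \<longleftrightarrow> k \<in> K}) \<union>
     {\<omega>\<in>space N. m = 0 \<and> (\<forall>L. \<exists>k\<ge>L. P k \<omega>)}"
  proof (intro set_eqI iffI)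
    fix \<omega> assume "\<omega> \<in> (\<lambda>\<omega>. card {k. P k \<omega>}) -` {m} \<inter> space N"
    then have c: "card {k. P k \<omega>} = m" "\<omega> \<in> space N" by auto
    show "\<omega> \<in> (\<Union>K\<in>{K. finite K \<and> card K = m}. {\<omega>\<in>space N. \<forall>k. P k \<omega> \<longleftrightarrow> k \<in> K}) \<union>
     {\<omega>\<in>space N. m = 0 \<and> (\<forall>L. \<exists>k\<ge>L. P k \<omega>)}"
    proof (cases "finite {k. P k \<omega>}")
      case True then show ?thesis using c by auto
    next
      case False
      then have "\<forall>L. \<exists>k\<ge>L. P k \<omega>" using infinite_nat_iff_unbounded_le by auto
      then show ?thesis using c False by auto
    qed
  next
    fix \<omega> assume h: "\<omega> \<in> (\<Union>K\<in>{K. finite K \<and> card K = m}. {\<omega>\<in>space N. \<forall>k. P k \<omega> \<longleftrightarrow> k \<in> K}) \<union>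
     {\<omega>\<in>space N. m = 0 \<and> (\<forall>L. \<exists>k\<ge>L. P k \<omega>)}"
    show "\<omega> \<in> (\<lambda>\<omega>. card {k. P k \<omega>}) -` {m} \<inter> space N"
    proof (cases "\<exists>K. finite K \<and> card K = m \<and> (\<forall>k. P k \<omega> \<longleftrightarrow> k \<in> K) \<and> \<omega> \<in> space N")
      case True
      then obtain K where K: "finite K" "card K = m" "\<forall>k. P k \<omega> \<longleftrightarrow> k \<in> K" "\<omega> \<in> space N" by auto
      then have "{k. P k \<omega>} = K" by auto
      then show ?thesis using K by auto
    next
      case False
      then have "\<omega> \<in> space N" "m = 0" "\<forall>L. \<exists>k\<ge>L. P k \<omega>" using h by auto
      then show ?thesis using infinite_nat_iff_unbounded_le by auto
    qed
  qed
  have c1: "(\<Union>K\<in>{K. finite K \<and> card K = m}. {\<omega>\<in>space N. \<forall>k. P k \<omega> \<longleftrightarrow> k \<in> K}) \<in> sets N"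
  proof (rule sets.countable_UN'')
    show "countable {K::nat set. finite K \<and> card K = m}"
      by (rule countable_subset[OF _ countable_Collect_finite]) auto
    fix K :: "nat set"
    show "{\<omega>\<in>space N. \<forall>k. P k \<omega> \<longleftrightarrow> k \<in> K} \<in> sets N" by measurable
  qed
  have c2: "{\<omega>\<in>space N. m = 0 \<and> (\<forall>L. \<exists>k\<ge>L. P k \<omega>)} \<in> sets N" by measurable
  show "(\<lambda>\<omega>. card {k. P k \<omega>}) -` {m} \<inter> space N \<in> sets N" unfolding eq using c1 c2 by auto
qed

lemma list_meas:
  assumes "\<And>i. i \<in> set xs \<Longrightarrow> f i \<in> measurable N (count_space (UNIV :: 'b::countable set))"
  shows "(\<lambda>\<omega>. map (\<lambda>i. f i \<omega>) xs) \<in> measurable N (count_space UNIV)"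
  using assms
proof (induction xs)
  case Nil then show ?case by simp
next
  case (Cons x xs)
  have [measurable]: "f x \<in> measurable N (count_space UNIV)" using Cons.prems by simp
  have [measurable]: "(\<lambda>\<omega>. map (\<lambda>i. f i \<omega>) xs) \<in> measurable N (count_space UNIV)" using Cons by simp
  have "(\<lambda>\<omega>. (f x \<omega>, map (\<lambda>i. f i \<omega>) xs)) \<in> measurable N (count_space UNIV \<Otimes>\<^sub>M count_space UNIV)"
    by measurable
  then have "(\<lambda>\<omega>. (f x \<omega>, map (\<lambda>i. f i \<omega>) xs)) \<in> measurable N (count_space UNIV)"
    by (simp add: pair_measure_countable)
  then have "(\<lambda>(a, b). a # b) \<circ> (\<lambda>\<omega>. (f x \<omega>, map (\<lambda>i. f i \<omega>) xs)) \<in> measurable N (count_space UNIV)"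
    by (rule measurable_comp) simp
  then show ?case by (simp add: o_def)
qed




context
  fixes N :: "'a measure" and E :: "nat \<Rightarrow> nat \<Rightarrow> 'a \<Rightarrow> real"
  assumes em: "\<And>i k. i \<ge> 1 \<Longrightarrow> (\<lambda>\<omega>. E i k \<omega>) \<in> borel_measurable N"
begin

lemma jump_meas: "i \<ge> 1 \<Longrightarrow> (\<lambda>\<omega>. jump (\<lambda>i k. E i k \<omega>) i k) \<in> borel_measurable N"
  unfolding jump_def by (intro borel_measurable_sum em)

lemma Tl_meas: "length ts0 \<ge> 1 \<Longrightarrow> p < length ts0 + m \<Longrightarrow> (\<lambda>\<omega>. Tl ts0 (\<lambda>i k. E i k \<omega>) m ! p) \<in> borel_measurable N"
proof (induction m arbitrary: p)
  case 0 then show ?case by simp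
next
  case (Suc m)
  define L where "L = length ts0 + m"
  have len: "\<And>\<omega>. length (Tl ts0 (\<lambda>i k. E i k \<omega>) m) = L" unfolding L_def by (simp add: Tl_length)
  show ?case
  proof (cases "p < L")
    case True
    have "(\<lambda>\<omega>. Tl ts0 (\<lambda>i k. E i k \<omega>) (Suc m) ! p) = (\<lambda>\<omega>. Tl ts0 (\<lambda>i k. E i k \<omega>) m ! p)"
      using True len by (simp add: nth_append)
    then show ?thesis using Suc.IH[OF Suc.prems(1)] True L_def by simp
  next
    case False
    then have pL: "p = L" using Suc.prems L_def by simp
    have eq1: "(\<lambda>\<omega>. Tl ts0 (\<lambda>i k. E i k \<omega>) (Suc m) ! p) = (\<lambda>\<omega>. nxt (\<lambda>i k. E i k \<omega>) (Tl ts0 (\<lambda>i k. E i k \<omega>) m))"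
      using pL len by (simp add: nth_append)
    define J :: "(nat \<times> nat) set" where "J = {(i, k). 1 \<le> k \<and> 1 \<le> i \<and> i \<le> L}"
    define v where "v = (\<lambda>(j::nat \<times> nat) \<omega>. Tl ts0 (\<lambda>i k. E i k \<omega>) m ! (fst j - 1) + jump (\<lambda>i k. E i k \<omega>) (fst j) (snd j))"
    define l where "l = (\<lambda>\<omega>. Tl ts0 (\<lambda>i k. E i k \<omega>) m ! (L - 1))"
    have L1: "L \<ge> 1" using Suc.prems unfolding L_def by simp
    have eq2: "nxt (\<lambda>i k. E i k \<omega>) (Tl ts0 (\<lambda>i k. E i k \<omega>) m) = Inf {v j \<omega> | j. j \<in> J \<and> v j \<omega> > l \<omega>}" for \<omega>
    proof -
      have lst: "last (Tl ts0 (\<lambda>i k. E i k \<omega>) m) = l \<omega>"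
        unfolding l_def using len[of \<omega>] L1 by (subst last_conv_nth) auto
      show ?thesis unfolding nxt_def lst len
        by (intro arg_cong[where f=Inf] set_eqI) (auto simp: J_def v_def)
    qed
    have vm: "v j \<in> borel_measurable N" if "j \<in> J" for j
    proof -
      have "(\<lambda>\<omega>. Tl ts0 (\<lambda>i k. E i k \<omega>) m ! (fst j - 1)) \<in> borel_measurable N"
        using that L_def Suc.prems(1) by (intro Suc.IH) (auto simp: J_def)
      moreover have "(\<lambda>\<omega>. jump (\<lambda>i k. E i k \<omega>) (fst j) (snd j)) \<in> borel_measurable N"
        using that by (intro jump_meas) (auto simp: J_def)
      ultimately show ?thesis unfolding v_def by (cases j) (simp add: borel_measurable_add)
    qed
    have lm: "l \<in> borel_measurable N" unfolding l_def using L1 L_def Suc.prems(1) by (intro Suc.IH) auto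
    show ?thesis unfolding eq1 eq2 by (rule inf_meas[OF vm lm])
  qed
qed

lemma BI_meas:
  assumes i: "i \<ge> 1" and t: "t \<in> borel_measurable N"
  shows "(\<lambda>\<omega>. BI (\<lambda>i k. E i k \<omega>) i (t \<omega>)) \<in> measurable N (count_space UNIV)"
proof -
  have c: "(\<lambda>\<omega>. card {k. 1 \<le> k \<and> jump (\<lambda>i k. E i k \<omega>) i k \<le> t \<omega>}) \<in> measurable N (count_space UNIV)"
  proof (rule card_meas)
    fix k
    have [measurable]: "(\<lambda>\<omega>. jump (\<lambda>i k. E i k \<omega>) i k) \<in> borel_measurable N" by (rule jump_meas[OF i])
    have [measurable]: "t \<in> borel_measurable N" by (rule t)
    show "Measurable.pred N (\<lambda>\<omega>. 1 \<le> k \<and> jump (\<lambda>i k. E i k \<omega>) i k \<le> t \<omega>)" by measurable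
  qed
  have "(\<lambda>n. BI0 i + n) \<circ> (\<lambda>\<omega>. card {k. 1 \<le> k \<and> jump (\<lambda>i k. E i k \<omega>) i k \<le> t \<omega>}) \<in> measurable N (count_space UNIV)"
    by (rule measurable_comp[OF c]) simp
  then show ?thesis unfolding BI_def o_def .
qed

lemma TA_meas: "j \<ge> 1 \<Longrightarrow> (\<lambda>\<omega>. TA (\<lambda>i k. E i k \<omega>) j) \<in> borel_measurable N"
  unfolding TA_def TAlist_Tl by (intro Tl_meas) auto

lemma TB_meas: "(\<lambda>\<omega>. TB (\<lambda>i k. E i k \<omega>) j) \<in> borel_measurable N"
  unfolding TB_def TBlist_Tl by (intro Tl_meas) auto

lemma DtildeA_meas: "(\<lambda>\<omega>. DtildeA (\<lambda>i k. E i k \<omega>) n) \<in> measurable N (count_space UNIV)"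
  unfolding DtildeA_def
proof (rule list_meas)
  fix i assume "i \<in> set [1..<n+1]"
  then have i: "i \<ge> 1" "i \<le> n" by auto
  show "(\<lambda>\<omega>. BI (\<lambda>i k. E i k \<omega>) i (TA (\<lambda>i k. E i k \<omega>) n - TA (\<lambda>i k. E i k \<omega>) i)) \<in> measurable N (count_space UNIV)"
    using i by (intro BI_meas borel_measurable_diff TA_meas) auto
qed

lemma DtildeB_meas: "(\<lambda>\<omega>. DtildeB (\<lambda>i k. E i k \<omega>) n) \<in> measurable N (count_space UNIV)"
  unfolding DtildeB_def
proof (rule list_meas)
  fix i assume "i \<in> set [1..<n+1]"
  then have i: "i \<ge> 1" by auto
  show "(\<lambda>\<omega>. BI (\<lambda>i k. E i k \<omega>) i (TB (\<lambda>i k. E i k \<omega>) n - TB (\<lambda>i k. E i k \<omega>) (i - 1))) \<in> measurable N (count_space UNIV)"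
    using i by (intro BI_meas borel_measurable_diff TB_meas)
qed

end




lemma main_generic:
  fixes M :: "'a measure" and E :: "nat \<Rightarrow> nat \<Rightarrow> 'a \<Rightarrow> real"
    and \<delta> :: real
  assumes \<delta>: "\<delta> > -1"
    and P: "prob_space M"
    and ind: "prob_space.indep_vars M (\<lambda>_. borel) (\<lambda>(i, k). E i k) {(i, k). i \<ge> 1}"
    and dst: "\<And>i k. i \<ge> 1 \<Longrightarrow> distributed M lborel (E i k) (exponential_density (BIrate \<delta> i k))"
    and X_def: "X = (\<lambda>\<omega>. \<lambda>p\<in>II. E (fst p) (snd p) \<omega>)"
  shows "X \<in> measurable M SP"
    and "\<And>i k. i \<ge> 1 \<Longrightarrow> (\<lambda>\<omega>. E i k \<omega>) \<in> borel_measurable M"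
    and "AE \<omega> in M. \<forall>i k. i \<ge> 1 \<longrightarrow> E i k \<omega> > 0"
    and "a \<ge> 1 \<Longrightarrow> distr M (count_space UNIV) (\<lambda>\<omega>. run a m (X \<omega>)) = measure_pmf (map_pmf Some (wB \<delta> a (\<lambda>_. 0) m))"
    and "a \<ge> 1 \<Longrightarrow> AE \<omega> in M. run a m (X \<omega>) \<noteq> None"
proof -
  interpret prob_space M by (rule P)
  have Em: "(\<lambda>\<omega>. E i k \<omega>) \<in> borel_measurable M" if "i \<ge> 1" for i k
    using distributed_measurable[OF dst[OF that, of k]] by simp
  then show "\<And>i k. i \<ge> 1 \<Longrightarrow> (\<lambda>\<omega>. E i k \<omega>) \<in> borel_measurable M" .
  have Xm: "X \<in> measurable M SP"
    unfolding X_def by (rule measurable_restrict) (auto simp: II_def intro: Em)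
  then show "X \<in> measurable M SP" .
  have dE: "distr M lborel (E i k) = ExpM (BIrate \<delta> i k)" if "i \<ge> 1" for i k
    unfolding ExpM_def by (rule distributed_distr_eq_density[OF dst[OF that]])
  have distrX: "distr M SP X = PS \<delta> (\<lambda>_. 0)"
  proof -
    have II': "{(i, k). i \<ge> (1::nat)} = II" by (auto simp: II_def)
    have cp: "(\<lambda>(i, k). E i k) = (\<lambda>p. E (fst p) (snd p))" by (simp add: fun_eq_iff)
    have ind': "indep_vars (\<lambda>_. borel) (\<lambda>p. E (fst p) (snd p)) II" using ind unfolding II' cp .
    have "distr M SP X = (\<Pi>\<^sub>M p\<in>II. distr M borel (E (fst p) (snd p)))"
      unfolding X_def
      by (rule indep_vars_iff_distr_eq_PiM'[THEN iffD1, OF _ _ ind'])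
         (auto simp: II_def intro!: exI[of _ "(1, 0)"] Em)
    also have "\<dots> = PS \<delta> (\<lambda>_. 0)"
      unfolding PS_def
    proof (rule PiM_cong[OF refl])
      fix p assume "p \<in> II"
      then have p: "fst p \<ge> 1" by (simp add: II_def)
      have "distr M borel (E (fst p) (snd p)) = distr M lborel (E (fst p) (snd p))"
        by (rule distr_cong) auto
      also have "\<dots> = ExpM (rt \<delta> (\<lambda>_. 0) p)" using dE[OF p] by (simp add: rt_def)
      finally show "distr M borel (E (fst p) (snd p)) = ExpM (rt \<delta> (\<lambda>_. 0) p)" .
    qed
    finally show ?thesis .
  qed
  show "AE \<omega> in M. \<forall>i k. i \<ge> 1 \<longrightarrow> E i k \<omega> > 0"
  proof -
    have "AE \<omega> in M. E i k \<omega> > 0" if i: "i \<ge> 1" for i k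
    proof -
      have "AE x in distr M lborel (E i k). x > 0"
      proof -
        have "AE x in lborel. x \<noteq> 0" by (rule AE_lborel_singleton)
        then have "AE x in lborel. 0 < ennreal (exponential_density (BIrate \<delta> i k) x) \<longrightarrow> x > 0"
          by eventually_elim (auto simp: exponential_density_def)
        then show ?thesis unfolding dE[OF i] ExpM_def by (subst AE_density) auto
      qed
      then show ?thesis by (rule AE_distrD[of "E i k" M lborel, rotated]) (use Em[OF i] in simp)
    qed
    then have "\<forall>i k. AE \<omega> in M. 1 \<le> i \<longrightarrow> E i k \<omega> > 0" by (auto intro: AE_I2)
    then show ?thesis by (simp add: AE_all_countable)
  qed
  have rD: "distr M (count_space UNIV) (\<lambda>\<omega>. run a m (X \<omega>)) = measure_pmf (map_pmf Some (wB \<delta> a (\<lambda>_. 0) m))"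
    if a: "a \<ge> 1" for a
  proof -
    have "distr M (count_space UNIV) (\<lambda>\<omega>. run a m (X \<omega>)) = distr (distr M SP X) (count_space UNIV) (run a m)"
      using distr_distr[OF run_meas Xm] by (simp add: o_def)
    also have "\<dots> = distr (PS \<delta> (\<lambda>_. 0)) (count_space UNIV) (run a m)" unfolding distrX ..
    also have "\<dots> = measure_pmf (map_pmf Some (wB \<delta> a (\<lambda>_. 0) m))" by (rule run_distr[OF \<delta> a])
    finally show ?thesis .
  qed
  then show "a \<ge> 1 \<Longrightarrow> distr M (count_space UNIV) (\<lambda>\<omega>. run a m (X \<omega>)) = measure_pmf (map_pmf Some (wB \<delta> a (\<lambda>_. 0) m))" .
  show "AE \<omega> in M. run a m (X \<omega>) \<noteq> None" if a: "a \<ge> 1"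
  proof -
    have rm: "(\<lambda>\<omega>. run a m (X \<omega>)) \<in> measurable M (count_space UNIV)"
      using measurable_comp[OF Xm run_meas] by (simp add: o_def)
    have "emeasure M ((\<lambda>\<omega>. run a m (X \<omega>)) -` {None} \<inter> space M) = emeasure (distr M (count_space UNIV) (\<lambda>\<omega>. run a m (X \<omega>))) {None}"
      by (rule emeasure_distr[OF rm, symmetric]) simp
    also have "\<dots> = 0" unfolding rD[OF a] by (simp add: emeasure_pmf_single pmf_eq_0_set_pmf)
    finally have "(\<lambda>\<omega>. run a m (X \<omega>)) -` {None} \<inter> space M \<in> null_sets M"
      using measurable_sets[OF rm, of "{None}"] by (simp add: null_sets_def)
    then show ?thesis by (rule AE_I') auto
  qed
qed

theorem mainTheorem1:
  fixes M :: "'a measure" and E :: "nat \<Rightarrow> nat \<Rightarrow> 'a \<Rightarrow> real"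
    and \<delta> :: real and n :: nat
  assumes "\<delta> > -1" and "n \<ge> 1"
    and "prob_space M"
    and "prob_space.indep_vars M (\<lambda>_. borel) (\<lambda>(i, k). E i k) {(i, k). i \<ge> 1}"
    and "\<And>i k. i \<ge> 1 \<Longrightarrow> distributed M lborel (E i k) (exponential_density (BIrate \<delta> i k))"
  shows "(distr M (count_space UNIV) (\<lambda>\<omega>. DtildeA (\<lambda>i k. E i k \<omega>) n)
           = measure_pmf (map_pmf (degseq n) (graphA \<delta> n))) \<and>
         (distr M (count_space UNIV) (\<lambda>\<omega>. DtildeB (\<lambda>i k. E i k \<omega>) n)
           = measure_pmf (map_pmf (degseq n) (graphB \<delta> n)))"
proof -
  define X where "X = (\<lambda>\<omega>. \<lambda>p\<in>II. E (fst p) (snd p) \<omega>)"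
  note G0 = main_generic[OF assms(1,3,4,5) X_def]
  have G1: "X \<in> measurable M SP" by (rule G0(1)) auto
  have G2: "\<And>i k. i \<ge> 1 \<Longrightarrow> (\<lambda>\<omega>. E i k \<omega>) \<in> borel_measurable M" by (rule G0(2)) auto
  have G3: "AE \<omega> in M. \<forall>i k. i \<ge> 1 \<longrightarrow> E i k \<omega> > 0" by (rule G0(3)) auto
  have F0X: "F0 (\<lambda>i k. E i k \<omega>) = X \<omega>" for \<omega> unfolding F0_def X_def ..
  have Em: "\<And>i k. i \<ge> 1 \<Longrightarrow> (\<lambda>\<omega>. E i k \<omega>) \<in> borel_measurable M" by (rule G2)
  have gen: "distr M (count_space UNIV) (\<lambda>\<omega>. D (\<lambda>i k. E i k \<omega>) n) = measure_pmf (map_pmf (dvec n) (wB \<delta> a (\<lambda>_. 0) (n - 1)))"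
    if a: "a \<ge> 1" and Dm: "(\<lambda>\<omega>. D (\<lambda>i k. E i k \<omega>) n) \<in> measurable M (count_space UNIV)"
      and path: "\<And>E' ws. (\<And>i k. i \<ge> 1 \<Longrightarrow> E' i k > 0) \<Longrightarrow> run a (n - 1) (F0 E') = Some ws \<Longrightarrow> D E' n = dvec n ws"
    for a D
  proof -
    have rm: "(\<lambda>\<omega>. run a (n - 1) (X \<omega>)) \<in> measurable M (count_space UNIV)"
      using measurable_comp[OF G1 run_meas] by (simp add: o_def)
    have AEs: "AE \<omega> in M. run a (n - 1) (X \<omega>) \<noteq> None" by (rule G0(5)) (use a in auto)
    have rD: "distr M (count_space UNIV) (\<lambda>\<omega>. run a (n - 1) (X \<omega>)) = measure_pmf (map_pmf Some (wB \<delta> a (\<lambda>_. 0) (n - 1)))"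
      by (rule G0(4)) (use a in auto)
    have AEeq: "AE \<omega> in M. D (\<lambda>i k. E i k \<omega>) n = dvec n (the (run a (n - 1) (X \<omega>)))"
      using G3 AEs
    proof eventually_elim
      case (elim \<omega>)
      then obtain ws where ws: "run a (n - 1) (X \<omega>) = Some ws" by auto
      have "D (\<lambda>i k. E i k \<omega>) n = dvec n ws"
        by (rule path) (use elim ws F0X in auto)
      then show ?case using ws by simp
    qed
    have "distr M (count_space UNIV) (\<lambda>\<omega>. D (\<lambda>i k. E i k \<omega>) n)
        = distr M (count_space UNIV) ((\<lambda>v. dvec n (the v)) \<circ> (\<lambda>\<omega>. run a (n - 1) (X \<omega>)))"
      by (rule distr_cong_AE[OF refl refl]) (use AEeq Dm rm in \<open>auto simp: o_def intro: measurable_comp\<close>)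
    also have "\<dots> = distr (distr M (count_space UNIV) (\<lambda>\<omega>. run a (n - 1) (X \<omega>))) (count_space UNIV) (\<lambda>v. dvec n (the v))"
      by (rule distr_distr[symmetric, OF _ rm]) simp
    also have "\<dots> = distr (measure_pmf (map_pmf Some (wB \<delta> a (\<lambda>_. 0) (n - 1)))) (count_space UNIV) (\<lambda>v. dvec n (the v))"
      unfolding rD ..
    also have "\<dots> = measure_pmf (map_pmf (\<lambda>v. dvec n (the v)) (map_pmf Some (wB \<delta> a (\<lambda>_. 0) (n - 1))))"
      by (simp add: map_pmf_rep_eq)
    also have "map_pmf (\<lambda>v. dvec n (the v)) (map_pmf Some (wB \<delta> a (\<lambda>_. 0) (n - 1))) = map_pmf (dvec n) (wB \<delta> a (\<lambda>_. 0) (n - 1))"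
      by (simp add: pmf.map_comp o_def)
    finally show ?thesis .
  qed
  have A: "distr M (count_space UNIV) (\<lambda>\<omega>. DtildeA (\<lambda>i k. E i k \<omega>) n) = measure_pmf (map_pmf (degseq n) (graphA \<delta> n))"
    unfolding pmfA[OF assms(1,2)]
    by (rule gen[of 1 DtildeA]) (auto intro: DtildeA_meas[OF Em] pathA[OF _ assms(2)])
  have B: "distr M (count_space UNIV) (\<lambda>\<omega>. DtildeB (\<lambda>i k. E i k \<omega>) n) = measure_pmf (map_pmf (degseq n) (graphB \<delta> n))"
    unfolding pmfB[OF assms(1,2)]
    by (rule gen[of 2 DtildeB]) (auto intro: DtildeB_meas[OF Em] pathB[OF _ assms(2)])
  show ?thesis using A B by simp
qed



end
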